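(* Let $p_0,s_0,r_0,p,s,r\in(0,\infty]$ satisfy $\frac1p-\frac1{p_0}=\frac1s-\frac1{s_0}=\frac1{r_0}-\frac1r=:\frac1\gamma$. Let $w,v$ be weights with $[w,v]_{(s,r)}<\infty$, and let $(t_0,t,w_t,v_t,W)$ be associated to $(\frac1\gamma,s_0,r_0,w,v)$ as in the context. If $\mathcal M$ is bounded from $L^t_{v_t}(\Omega)$ to $L^t_{w_t}(\Omega)$, then $$L^p_v(\Omega)\subseteq\bigcup_{(w_0,v_0)\in W}L^{p_0}_{v_0}(\Omega).$$
   Context: $(\Omega,\mu)$ is a $\sigma$-finite measure space with a fixed basis of sets $\mathcal U$: a countable collection of measurable sets $U$ with $0<\mu(U)<\infty$ such that $\bigcup_{U\in\mathcal U}U=\Omega$ and for all $x,y\in\Omega$ there is $U\in\mathcal U$ with $x,y\in U$. A weight is a measurable function $w:\Omega\to(0,\infty)$. For $p\in(0,\infty]$ and a weight $w$, $L^p_w(\Omega)$ is the space of measurable $f$ with $\|f\|_{L^p_w(\Omega)}:=\|fw\|_{L^p(\Omega)}<\infty$. For $s,r\in(0,\infty]$ and weights $w,v$, $[w,v]_{(s,r)}:=\sup_{U\in\mathcal U}\mu(U)^{-\frac1s-\frac1r}\|w\|_{L^s(U)}\|v^{-1}\|_{L^r(U)}$ (with $\frac1\infty:=0$). The maximal operator is $\mathcal Mf:=\sup_{U\in\mathcal U}\mu(U)^{-1}\|f\|_{L^1(U)}\mathbf 1_U$. Weight classes and rescaled exponents: given $\frac1\gamma\in\mathbb R$, $s_0,r_0\in(0,\infty]$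 and weights $w,v$, define $s,r\in(0,\infty]$ by $\frac1s-\frac1{s_0}=\frac1{r_0}-\frac1r=\frac1\gamma$ and $\alpha$ by $\frac1\alpha=\frac1{s_0}+\frac1{r_0}$. If $\frac1\gamma>0$: $t_0:=s_0/\alpha$, $t:=s/\alpha$, $(w_t,v_t):=(w^\alpha,v^\alpha)$. If $\frac1\gamma=0$: $t_0:=t:=1$ (no $w_t,v_t$). If $\frac1\gamma<0$: $t_0:=r_0/\alpha$, $t:=r/\alpha$, $(w_t,v_t):=(v^{-\alpha},w^{-\alpha})$. Set $W:=\{(w,v)\}$ if $\frac1\gamma=0$, and otherwise $W:=\{(\tilde w,\tilde v)$ pairs of weights $:\tilde w\tilde v^{-1}=wv^{-1},\ [\tilde w,\tilde v]_{(s_0,r_0)}<\infty\}$. Convention: when $\frac1\gamma=0$, the hypothesis "$\mathcal M$ bounded from $L^t_{v_t}$ to $L^t_{w_t}$" is regarded as satisfied. *)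

theory Defs
  imports "HOL-Analysis.Analysis" "HOL-Probability.Essential_Supremum"
begin

text \<open>Exponents in (0,\<infinity>] are modelled as ennreal values p > 0.
  Reciprocal 1/p (with 1/\<infinity> = 0):\<close>
definition rcp :: "ennreal \<Rightarrow> real" where
  "rcp p = enn2real (inverse p)"

definition epow :: "ennreal \<Rightarrow> real \<Rightarrow> ennreal" where
  "epow x q = (if x = \<infinity> then \<infinity> else ennreal (enn2real x powr q))"

definition Lnorm :: "'a measure \<Rightarrow> ennreal \<Rightarrow> 'a set \<Rightarrow> ('a \<Rightarrow> ennreal) \<Rightarrow> ennreal" where
  "Lnorm M p A g =
     (if p = \<infinity> then esssup M (\<lambda>x. g x * indicator A x)
      else epow (\<integral>\<^sup>+ x \<in> A. epow (g x) (enn2real p) \<partial>M) (1 / enn2real p))"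

text \<open>Weighted norm: norm of f in L^p_w is the L^p norm of f w.\<close>
definition wnorm :: "'a measure \<Rightarrow> ennreal \<Rightarrow> ('a \<Rightarrow> real) \<Rightarrow> ('a \<Rightarrow> real) \<Rightarrow> ennreal" where
  "wnorm M p w f = Lnorm M p (space M) (\<lambda>x. ennreal (\<bar>f x\<bar> * w x))"

definition Lpw :: "'a measure \<Rightarrow> ennreal \<Rightarrow> ('a \<Rightarrow> real) \<Rightarrow> ('a \<Rightarrow> real) set" where
  "Lpw M p w = {f. f \<in> borel_measurable M \<and> wnorm M p w f < \<infinity>}"

definition weight :: "'a measure \<Rightarrow> ('a \<Rightarrow> real) \<Rightarrow> bool" where
  "weight M w \<longleftrightarrow> w \<in> borel_measurable M \<and> (\<forall>x\<in>space M. 0 < w x)"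

definition basis_of_sets :: "'a measure \<Rightarrow> 'a set set \<Rightarrow> bool" where
  "basis_of_sets M \<U> \<longleftrightarrow> countable \<U> \<and>
     (\<forall>U\<in>\<U>. U \<in> sets M \<and> 0 < emeasure M U \<and> emeasure M U < \<infinity>) \<and>
     \<Union>\<U> = space M \<and>
     (\<forall>x\<in>space M. \<forall>y\<in>space M. \<exists>U\<in>\<U>. x \<in> U \<and> y \<in> U)"

definition wv_const :: "'a measure \<Rightarrow> 'a set set \<Rightarrow> ennreal \<Rightarrow> ennreal \<Rightarrow>
    ('a \<Rightarrow> real) \<Rightarrow> ('a \<Rightarrow> real) \<Rightarrow> ennreal" where
  "wv_const M \<U> s r w v = (SUP U\<in>\<U>.
      ennreal (measure M U powr (- (rcp s + rcp r)))
      * Lnorm M s U (\<lambda>x. ennreal (w x)) * Lnorm M r U (\<lambda>x. ennreal (1 / v x)))"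

definition maxop :: "'a measure \<Rightarrow> 'a set set \<Rightarrow> ('a \<Rightarrow> real) \<Rightarrow> 'a \<Rightarrow> ennreal" where
  "maxop M \<U> f x = (SUP U\<in>\<U>.
      ennreal (1 / measure M U) * Lnorm M 1 U (\<lambda>y. ennreal \<bar>f y\<bar>) * indicator U x)"

definition maxop_bounded :: "'a measure \<Rightarrow> 'a set set \<Rightarrow> ennreal \<Rightarrow>
    ('a \<Rightarrow> real) \<Rightarrow> ('a \<Rightarrow> real) \<Rightarrow> bool" where
  "maxop_bounded M \<U> t v w \<longleftrightarrow> (\<exists>C::real. \<forall>f \<in> Lpw M t v.
      Lnorm M t (space M) (\<lambda>x. maxop M \<U> f x * ennreal (w x)) \<le> ennreal C * wnorm M t v f)"

text \<open>Rescaled exponents; gi stands for 1/gamma.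
  1/alpha = 1/s0 + 1/r0.\<close>
definition alpha_exp :: "ennreal \<Rightarrow> ennreal \<Rightarrow> real" where
  "alpha_exp s0 r0 = 1 / (rcp s0 + rcp r0)"

definition t_exp :: "real \<Rightarrow> ennreal \<Rightarrow> ennreal \<Rightarrow> ennreal \<Rightarrow> ennreal \<Rightarrow> ennreal" where
  "t_exp gi s0 r0 s r =
     (if gi > 0 then s / ennreal (alpha_exp s0 r0)
      else if gi = 0 then 1 else r / ennreal (alpha_exp s0 r0))"

definition t0_exp :: "real \<Rightarrow> ennreal \<Rightarrow> ennreal \<Rightarrow> ennreal" where
  "t0_exp gi s0 r0 =
     (if gi > 0 then s0 / ennreal (alpha_exp s0 r0)
      else if gi = 0 then 1 else r0 / ennreal (alpha_exp s0 r0))"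

text \<open>(w_t, v_t): (w^alpha, v^alpha) if gi > 0, (v^-alpha, w^-alpha) if gi < 0
  (unused if gi = 0).\<close>
definition wt_weight :: "real \<Rightarrow> ennreal \<Rightarrow> ennreal \<Rightarrow> ('a \<Rightarrow> real) \<Rightarrow> ('a \<Rightarrow> real) \<Rightarrow> 'a \<Rightarrow> real" where
  "wt_weight gi s0 r0 w v x =
     (if gi > 0 then w x powr alpha_exp s0 r0 else v x powr (- alpha_exp s0 r0))"

definition vt_weight :: "real \<Rightarrow> ennreal \<Rightarrow> ennreal \<Rightarrow> ('a \<Rightarrow> real) \<Rightarrow> ('a \<Rightarrow> real) \<Rightarrow> 'a \<Rightarrow> real" where
  "vt_weight gi s0 r0 w v x =
     (if gi > 0 then v x powr alpha_exp s0 r0 else w x powr (- alpha_exp s0 r0))"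

definition W_class :: "'a measure \<Rightarrow> 'a set set \<Rightarrow> real \<Rightarrow> ennreal \<Rightarrow> ennreal \<Rightarrow>
    ('a \<Rightarrow> real) \<Rightarrow> ('a \<Rightarrow> real) \<Rightarrow> (('a \<Rightarrow> real) \<times> ('a \<Rightarrow> real)) set" where
  "W_class M \<U> gi s0 r0 w v =
     (if gi = 0 then {(w, v)}
      else {(w', v'). weight M w' \<and> weight M v' \<and>
              (\<forall>x\<in>space M. w' x / v' x = w x / v x) \<and>
              wv_const M \<U> s0 r0 w' v' < \<infinity>})"

end

theory Submission
  imports Defs
begin


lemma epow_0[simp]: "q > 0 \<Longrightarrow> epow 0 q = 0"
  by (simp add: epow_def)
lemma epow_top[simp]: "epow top q = top"
  by (simp add: epow_def)
lemma epow_ennreal: "0 \<le> x \<Longrightarrow> epow (ennreal x) q = ennreal (x powr q)"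
  by (simp add: epow_def)
lemma epow_1[simp]: "epow x 1 = x"
  by (cases x) (auto simp: epow_def)
lemma epow_epow: assumes "a > 0" "b > 0" shows "epow (epow x a) b = epow x (a * b)"
  by (cases x) (auto simp: epow_ennreal powr_powr)

lemma epow_eq_0_iff[simp]: "q > 0 \<Longrightarrow> epow x q = 0 \<longleftrightarrow> x = 0"
  by (cases x) (auto simp: epow_ennreal)

lemma epow_eq_top_iff[simp]: "epow x q = top \<longleftrightarrow> x = top"
  by (cases x) (auto simp: epow_ennreal)

lemma epow_inv: assumes "q > 0" shows "epow (epow x q) (1/q) = x"
  using epow_epow[of q "1/q" x] assms by simp

lemma epow_mono: assumes "x \<le> y" "q \<ge> 0" shows "epow x q \<le> epow y q"
proof (cases y)
  case (real b)
  then obtain a where "x = ennreal a" "0 \<le> a" "a \<le> b"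
    using assms by (cases x) (auto simp: top_unique)
  thus ?thesis using real assms by (simp add: epow_ennreal powr_mono2)
qed (simp add: epow_def)

lemma epow_mult: assumes "q > 0" shows "epow (x * y) q = epow x q * epow y q"
proof (cases x)
  case (real a)
  show ?thesis
  proof (cases y)
    case (real b)
    then show ?thesis using \<open>x = ennreal a\<close> \<open>0 \<le> a\<close>
      by (simp add: epow_ennreal powr_mult flip: ennreal_mult)
  next
    case top
    then show ?thesis using \<open>x = ennreal a\<close> \<open>0 \<le> a\<close> assms
      by (cases "a = 0") (simp_all add: epow_ennreal ennreal_mult_top)
  qed
next
  case top
  then show ?thesis using assms
    by (cases "y = 0") (simp_all add: ennreal_top_mult)
qed

lemma epow_le_iff: assumes "q > 0" shows "epow x q \<le> epow y q \<longleftrightarrow> x \<le> y"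
proof
  assume "epow x q \<le> epow y q"
  from epow_mono[OF this, of "1/q"] show "x \<le> y" using assms by (simp add: epow_inv)
qed (use epow_mono assms in auto)

lemma epow_less_iff: assumes "q > 0" shows "epow x q < epow y q \<longleftrightarrow> x < y"
  using epow_le_iff[OF assms, of y x] by (simp add: not_le[symmetric])

lemma epow_measurable[measurable]:
  "(\<lambda>x. epow (f x) q) \<in> borel_measurable M" if "f \<in> borel_measurable M"
proof -
  have "(\<lambda>x. epow (f x) q) = (\<lambda>x. if f x = top then top else ennreal (enn2real (f x) powr q))"
    by (simp add: epow_def fun_eq_iff)
  also have "\<dots> \<in> borel_measurable M" using that by measurable
  finally show ?thesis .
qed

lemma epow_indicator: "q > 0 \<Longrightarrow> epow (g * indicator A x) q = epow g q * indicator A x"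
  by (auto simp: indicator_def)

lemma epow_pos_iff[simp]: "q > 0 \<Longrightarrow> 0 < epow x q \<longleftrightarrow> 0 < x"
  using epow_eq_0_iff by (metis not_gr_zero)

lemma epow_less_top_iff[simp]: "epow x q < top \<longleftrightarrow> x < top"
  using epow_eq_top_iff by (metis top.not_eq_extremum)

lemma epow_mult_exp: assumes "a > 0" "b > 0" shows "epow x (a + b) = epow x a * epow x b"
proof (cases x)
  case (real r) thus ?thesis using assms
    by (cases "r = 0") (auto simp: epow_ennreal powr_add ennreal_mult)
qed (use assms in auto)



lemma Lnorm_fin: "p \<noteq> top \<Longrightarrow> Lnorm M p A g =
   epow (\<integral>\<^sup>+ x. epow (g x) (enn2real p) * indicator A x \<partial>M) (1 / enn2real p)"
  by (simp add: Lnorm_def)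

lemma Lnorm_inf: "Lnorm M top A g = esssup M (\<lambda>x. g x * indicator A x)"
  by (simp add: Lnorm_def)

lemma esssup_le_iff:
  fixes h :: "'a \<Rightarrow> ennreal"
  assumes "h \<in> borel_measurable M"
  shows "esssup M h \<le> z \<longleftrightarrow> (AE x in M. h x \<le> z)"
proof
  assume "esssup M h \<le> z"
  with esssup_AE[of h M] show "AE x in M. h x \<le> z" by (auto elim: eventually_mono)
next
  assume "AE x in M. h x \<le> z" then show "esssup M h \<le> z" using esssup_I assms by blast
qed

lemma enn2real_pos: "0 < p \<Longrightarrow> p \<noteq> top \<Longrightarrow> 0 < enn2real (p::ennreal)"
  by (simp add: enn2real_positive_iff top.not_eq_extremum)

lemma Lnorm_mono:
  assumes [measurable]: "g \<in> borel_measurable M" "g' \<in> borel_measurable M" "A \<in> sets M" and "0 < p"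
    and le: "AE x in M. x \<in> A \<longrightarrow> g x \<le> g' x"
  shows "Lnorm M p A g \<le> Lnorm M p A g'"
proof (cases "p = top")
  case True
  show ?thesis unfolding True Lnorm_inf
    by (rule esssup_AE_mono) (use le in \<open>auto elim!: eventually_mono simp: indicator_def\<close>)
next
  case False
  have P: "0 < enn2real p" using False assms by (simp add: enn2real_pos)
  show ?thesis unfolding Lnorm_fin[OF False]
    by (intro epow_mono nn_integral_mono_AE) (use le P in \<open>auto elim!: eventually_mono intro!: epow_mono simp: indicator_def\<close>)
qed



lemma Lnorm_cmult_le:
  assumes [measurable]: "g \<in> borel_measurable M" "A \<in> sets M" and "0 < p" "c \<noteq> top"
  shows "Lnorm M p A (\<lambda>x. c * g x) \<le> c * Lnorm M p A g"
proof (cases "p = top")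
  case True
  have "AE x in M. g x * indicator A x \<le> esssup M (\<lambda>x. g x * indicator A x)"
    by (rule esssup_AE)
  hence "AE x in M. c * g x * indicator A x \<le> c * esssup M (\<lambda>x. g x * indicator A x)"
    by (elim eventually_mono) (simp add: mult.assoc mult_left_mono)
  then show ?thesis unfolding True Lnorm_inf
    by (rule esssup_I[rotated]) measurable
next
  case False
  have P: "0 < enn2real p" using False assms by (simp add: enn2real_pos)
  have "(\<integral>\<^sup>+ x. epow (c * g x) (enn2real p) * indicator A x \<partial>M)
      = epow c (enn2real p) * (\<integral>\<^sup>+ x. epow (g x) (enn2real p) * indicator A x \<partial>M)"
    using P by (simp add: epow_mult mult.assoc flip: nn_integral_cmult)
  then show ?thesis unfolding Lnorm_fin[OF False]
    using P by (simp add: epow_mult epow_inv)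
qed

lemma Lnorm_pow_le:
  assumes [measurable]: "g \<in> borel_measurable M" "A \<in> sets M" and "0 < p" "0 < q"
  shows "Lnorm M p A (\<lambda>x. epow (g x) q) \<le> epow (Lnorm M (p * ennreal q) A g) q"
proof (cases "p = top")
  case True
  have pq: "top * ennreal q = top" using assms by (simp add: ennreal_top_mult)
  have "AE x in M. g x * indicator A x \<le> esssup M (\<lambda>x. g x * indicator A x)"
    by (rule esssup_AE)
  hence "AE x in M. epow (g x) q * indicator A x \<le> epow (esssup M (\<lambda>x. g x * indicator A x)) q"
    by (elim eventually_mono) (use assms in \<open>auto simp: indicator_def intro: epow_mono\<close>)
  then show ?thesis unfolding True Lnorm_inf pq
    by (rule esssup_I[rotated]) measurable
next
  case False
  have P: "0 < enn2real p" using False assms by (simp add: enn2real_pos)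
  have pq: "p * ennreal q \<noteq> top" using False assms by (simp add: ennreal_mult_eq_top_iff)
  have e: "enn2real (p * ennreal q) = enn2real p * q" using assms by (simp add: enn2real_mult)
  have "(\<integral>\<^sup>+ x. epow (epow (g x) q) (enn2real p) * indicator A x \<partial>M)
     = (\<integral>\<^sup>+ x. epow (g x) (enn2real p * q) * indicator A x \<partial>M)"
    using P assms by (simp add: epow_epow mult.commute)
  then show ?thesis unfolding Lnorm_fin[OF False] Lnorm_fin[OF pq] e
    using P assms by (simp add: epow_epow)
qed

lemma Lnorm_one: "Lnorm M 1 A g = (\<integral>\<^sup>+ x. g x * indicator A x \<partial>M)"
  by (simp add: Lnorm_fin)

lemma Lnorm_pos:
  assumes [measurable]: "g \<in> borel_measurable M" "A \<in> sets M" and "0 < p"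
    and "emeasure M A > 0" and pos: "\<And>x. x \<in> A \<Longrightarrow> 0 < g x"
  shows "0 < Lnorm M p A g"
proof (rule ccontr)
  assume "\<not> 0 < Lnorm M p A g"
  hence z: "Lnorm M p A g = 0" by (simp add: not_less)
  have AEA: "AE x in M. x \<notin> A"
  proof (cases "p = top")
    case True
    hence "esssup M (\<lambda>x. g x * indicator A x) \<le> 0" using z by (simp add: Lnorm_inf)
    hence "AE x in M. g x * indicator A x \<le> 0" by (subst (asm) esssup_le_iff) auto
    then show ?thesis
    proof (elim eventually_mono)
      fix x assume h: "g x * indicator A x \<le> 0"
      show "x \<notin> A"
      proof
        assume "x \<in> A" with h have "g x \<le> 0" by simp
        with pos[OF \<open>x \<in> A\<close>] show False by simp
      qed
    qed
  next
    case False
    have P: "0 < enn2real p" using False assms by (simp add: enn2real_pos)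
    have "epow (\<integral>\<^sup>+ x. epow (g x) (enn2real p) * indicator A x \<partial>M) (1 / enn2real p) = 0"
      using z by (simp only: Lnorm_fin[OF False])
    hence int0: "(\<integral>\<^sup>+ x. epow (g x) (enn2real p) * indicator A x \<partial>M) = 0"
      using P by simp
    have m: "(\<lambda>x. epow (g x) (enn2real p) * indicator A x) \<in> borel_measurable M" by measurable
    have "AE x in M. epow (g x) (enn2real p) * indicator A x = 0"
      using nn_integral_0_iff_AE[OF m] int0 by blast
    then show ?thesis
    proof (elim eventually_mono)
      fix x assume h: "epow (g x) (enn2real p) * indicator A x = 0"
      show "x \<notin> A"
      proof
        assume "x \<in> A" with h P have "g x = 0" by simp
        with pos[OF \<open>x \<in> A\<close>] show False by simp
      qed
    qed
  qed
  have seteq: "{x\<in>space M. \<not> (x \<notin> A)} = A" using sets.sets_into_space[OF assms(2)] by auto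
  have "emeasure M A = 0" using AE_iff_measurable[OF assms(2) seteq] AEA by simp
  then show False using assms by simp
qed



lemma young_real:
  fixes x y a b \<theta> :: real
  assumes "0 < \<theta>" "\<theta> < 1" "0 < a" "0 < b" "0 \<le> x" "0 \<le> y"
  shows "x powr \<theta> * y powr (1 - \<theta>) \<le> (a powr \<theta> * b powr (1 - \<theta>)) * (\<theta> / a * x + (1 - \<theta>) / b * y)"
proof (cases "x = 0 \<or> y = 0")
  case True
  have "0 \<le> (a powr \<theta> * b powr (1 - \<theta>)) * (\<theta> / a * x + (1 - \<theta>) / b * y)"
    using assms by (intro mult_nonneg_nonneg add_nonneg_nonneg) auto
  then show ?thesis using True assms by auto
next
  case False
  hence xy: "0 < x" "0 < y" using assms by auto
  have "(x / a) powr \<theta> * (y / b) powr (1 - \<theta>) \<le> \<theta> * (x / a) + (1 - \<theta>) * (y / b)"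
    using assms xy by (intro Youngs_inequality_0) auto
  hence "(a powr \<theta> * b powr (1 - \<theta>)) * ((x / a) powr \<theta> * (y / b) powr (1 - \<theta>))
       \<le> (a powr \<theta> * b powr (1 - \<theta>)) * (\<theta> * (x / a) + (1 - \<theta>) * (y / b))"
    using assms by (intro mult_left_mono) auto
  moreover have "(a powr \<theta> * b powr (1 - \<theta>)) * ((x / a) powr \<theta> * (y / b) powr (1 - \<theta>))
      = x powr \<theta> * y powr (1 - \<theta>)"
    using assms xy by (simp add: powr_divide field_simps)
  ultimately show ?thesis by simp
qed

lemma young_enn:
  assumes "0 < \<theta>" "\<theta> < 1" "0 < a" "0 < b"
  shows "epow x \<theta> * epow y (1 - \<theta>) \<le>
    ennreal (a powr \<theta> * b powr (1 - \<theta>)) * (ennreal (\<theta> / a) * x + ennreal ((1 - \<theta>) / b) * y)"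
proof (cases "x = top \<or> y = top")
  case True
  have C: "ennreal (a powr \<theta> * b powr (1 - \<theta>)) > 0" using assms by simp
  have S: "ennreal (\<theta> / a) * x + ennreal ((1 - \<theta>) / b) * y = top"
    using True assms by (auto simp: ennreal_mult_eq_top_iff)
  have "ennreal (a powr \<theta> * b powr (1 - \<theta>)) * (ennreal (\<theta> / a) * x + ennreal ((1 - \<theta>) / b) * y) = top"
    unfolding S by (rule ennreal_top_mult_left) (metis C less_irrefl)
  then show ?thesis by (metis top_greatest)
next
  case False
  then obtain xr yr where x: "x = ennreal xr" "0 \<le> xr" and y: "y = ennreal yr" "0 \<le> yr"
    by (metis enn2real_nonneg ennreal_enn2real_if)
  have "ennreal (xr powr \<theta> * yr powr (1 - \<theta>)) \<le>
      ennreal ((a powr \<theta> * b powr (1 - \<theta>)) * (\<theta> / a * xr + (1 - \<theta>) / b * yr))"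
    using young_real[OF assms x(2) y(2)] by (rule ennreal_leI)
  moreover have "ennreal ((a powr \<theta> * b powr (1 - \<theta>)) * (\<theta> / a * xr + (1 - \<theta>) / b * yr))
    = ennreal (a powr \<theta> * b powr (1 - \<theta>)) * (ennreal (\<theta> / a) * x + ennreal ((1 - \<theta>) / b) * y)"
    using assms x y by (simp add: ennreal_mult[symmetric] ennreal_plus[symmetric] del: ennreal_plus)
  moreover have "ennreal (xr powr \<theta> * yr powr (1 - \<theta>)) = epow x \<theta> * epow y (1 - \<theta>)"
    using x y by (simp add: epow_ennreal ennreal_mult)
  ultimately show ?thesis by simp
qed



lemma AE_zero_integrand:
  assumes [measurable]: "F \<in> borel_measurable M" "A \<in> sets M"
    and "(\<integral>\<^sup>+ x. F x * indicator A x \<partial>M) = 0"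
  shows "AE x in M. x \<in> A \<longrightarrow> F x = 0"
proof -
  have m: "(\<lambda>x. F x * indicator A x) \<in> borel_measurable M" by measurable
  have "AE x in M. F x * indicator A x = 0" using nn_integral_0_iff_AE[OF m] assms(3) by simp
  then show ?thesis by (elim eventually_mono) auto
qed

lemma interp:
  assumes [measurable]: "F \<in> borel_measurable M" "G \<in> borel_measurable M" "A \<in> sets M"
    and th: "0 < \<theta>" "\<theta> < 1"
  shows "(\<integral>\<^sup>+ x. epow (F x) \<theta> * epow (G x) (1 - \<theta>) * indicator A x \<partial>M)
    \<le> epow (\<integral>\<^sup>+ x. F x * indicator A x \<partial>M) \<theta> * epow (\<integral>\<^sup>+ x. G x * indicator A x \<partial>M) (1 - \<theta>)"
proof -
  define I1 where "I1 = (\<integral>\<^sup>+ x. F x * indicator A x \<partial>M)"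
  define I2 where "I2 = (\<integral>\<^sup>+ x. G x * indicator A x \<partial>M)"
  have th': "0 < 1 - \<theta>" using th by simp
  have "(\<integral>\<^sup>+ x. epow (F x) \<theta> * epow (G x) (1 - \<theta>) * indicator A x \<partial>M) \<le> epow I1 \<theta> * epow I2 (1 - \<theta>)"
  proof (cases "I1 = 0 \<or> I2 = 0")
    case True
    have "AE x in M. epow (F x) \<theta> * epow (G x) (1 - \<theta>) * indicator A x = 0"
    proof (cases "I1 = 0")
      case True
      from AE_zero_integrand[OF assms(1) assms(3) True[unfolded I1_def]] show ?thesis
        by (elim eventually_mono) (use th in \<open>auto simp: indicator_def\<close>)
    next
      case False
      hence "I2 = 0" using \<open>I1 = 0 \<or> I2 = 0\<close> by simp
      from AE_zero_integrand[OF assms(2) assms(3) this[unfolded I2_def]] show ?thesis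
        by (elim eventually_mono) (use th' in \<open>auto simp: indicator_def\<close>)
    qed
    hence "(\<integral>\<^sup>+ x. epow (F x) \<theta> * epow (G x) (1 - \<theta>) * indicator A x \<partial>M) = (\<integral>\<^sup>+ x. 0 \<partial>M)"
      by (rule nn_integral_cong_AE)
    then show ?thesis by simp
  next
    case False
    hence n0: "I1 \<noteq> 0" "I2 \<noteq> 0" by auto
    show ?thesis
    proof (cases "I1 = top \<or> I2 = top")
      case True
      have "epow I1 \<theta> * epow I2 (1 - \<theta>) = top"
        using True n0 th th' by (auto simp: ennreal_mult_eq_top_iff)
      then show ?thesis by simp
    next
      case False
      then obtain a b where a: "I1 = ennreal a" "0 < a" and b: "I2 = ennreal b" "0 < b"
        using n0 by (metis enn2real_nonneg ennreal_enn2real_if not_le ennreal_eq_0_iff)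
      define C where "C = ennreal (a powr \<theta> * b powr (1 - \<theta>))"
      have "(\<integral>\<^sup>+ x. epow (F x) \<theta> * epow (G x) (1 - \<theta>) * indicator A x \<partial>M)
          \<le> (\<integral>\<^sup>+ x. C * (ennreal (\<theta> / a) * (F x * indicator A x) + ennreal ((1 - \<theta>) / b) * (G x * indicator A x)) \<partial>M)"
      proof (intro nn_integral_mono)
        fix x
        show "epow (F x) \<theta> * epow (G x) (1 - \<theta>) * indicator A x
          \<le> C * (ennreal (\<theta> / a) * (F x * indicator A x) + ennreal ((1 - \<theta>) / b) * (G x * indicator A x))"
          using young_enn[OF th a(2) b(2), of "F x" "G x"] unfolding C_def
          by (cases "x \<in> A") auto
      qed
      also have "\<dots> = C * (ennreal (\<theta> / a) * I1 + ennreal ((1 - \<theta>) / b) * I2)"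
        unfolding I1_def I2_def
        by (simp add: nn_integral_cmult nn_integral_add)
      also have "ennreal (\<theta> / a) * I1 + ennreal ((1 - \<theta>) / b) * I2 = 1"
        using a b th by (simp add: ennreal_mult[symmetric] ennreal_plus[symmetric] del: ennreal_plus)
      also have "C * 1 = epow I1 \<theta> * epow I2 (1 - \<theta>)"
        unfolding C_def using a b by (simp add: epow_ennreal ennreal_mult)
      finally show ?thesis .
    qed
  qed
  then show ?thesis unfolding I1_def I2_def .
qed



lemma rcp_top[simp]: "rcp top = 0"
  by (simp add: rcp_def)

lemma rcp_fin: assumes "0 < p" "p \<noteq> top" shows "rcp p = 1 / enn2real p"
proof -
  obtain x where x: "p = ennreal x" "0 < x" using assms
    by (metis enn2real_pos ennreal_enn2real_if)
  then show ?thesis unfolding rcp_def by (simp add: inverse_ennreal inverse_eq_divide)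
qed

lemma rcp_nonneg: "0 \<le> rcp p" by (simp add: rcp_def)

lemma rcp_eq_0_iff: "0 < p \<Longrightarrow> rcp p = 0 \<longleftrightarrow> p = top"
  using rcp_fin[of p] enn2real_pos[of p] by fastforce

lemma rcp_inj: "0 < p \<Longrightarrow> 0 < q \<Longrightarrow> rcp p = rcp q \<Longrightarrow> p = q"
proof (cases "p = top"; cases "q = top")
  assume "0 < p" "0 < q" "rcp p = rcp q" "p \<noteq> top" "q \<noteq> top"
  then have "enn2real p = enn2real q" using rcp_fin[of p] rcp_fin[of q] enn2real_pos[of p] enn2real_pos[of q]
    by (simp add: divide_eq_eq)
  then show "p = q" using \<open>p \<noteq> top\<close> \<open>q \<noteq> top\<close> by (metis ennreal_enn2real_if)
qed (auto simp: rcp_eq_0_iff)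

lemma Lnorm_holder:
  assumes [measurable]: "f \<in> borel_measurable M" "g \<in> borel_measurable M" "A \<in> sets M"
    and pos: "0 < p" "0 < p1" "0 < p2" and fin: "p \<noteq> top" "p2 \<noteq> top"
    and r: "rcp p = rcp p1 + rcp p2" and f1: "Lnorm M p1 A f \<noteq> top"
  shows "Lnorm M p A (\<lambda>x. f x * g x) \<le> Lnorm M p1 A f * Lnorm M p2 A g"
proof (cases "p1 = top")
  case True
  hence "p = p2" using r rcp_inj pos by simp
  define E where "E = Lnorm M p1 A f"
  have "AE x in M. f x * indicator A x \<le> E" unfolding E_def True Lnorm_inf by (rule esssup_AE)
  hence "AE x in M. x \<in> A \<longrightarrow> f x * g x \<le> E * g x"
    by (elim eventually_mono) (auto intro: mult_right_mono)
  hence "Lnorm M p A (\<lambda>x. f x * g x) \<le> Lnorm M p A (\<lambda>x. E * g x)"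
    using pos by (intro Lnorm_mono) auto
  also have "\<dots> \<le> E * Lnorm M p A g"
    using pos f1 by (intro Lnorm_cmult_le) (auto simp: E_def)
  finally show ?thesis unfolding E_def \<open>p = p2\<close> .
next
  case False
  define P where "P = enn2real p"
  define P1 where "P1 = enn2real p1"
  define P2 where "P2 = enn2real p2"
  have P: "0 < P" "0 < P1" "0 < P2" unfolding P_def P1_def P2_def
    using pos fin False by (auto intro: enn2real_pos)
  have rr: "1 / P = 1 / P1 + 1 / P2" using r pos fin False
    by (simp add: rcp_fin P_def P1_def P2_def)
  define \<theta> where "\<theta> = P / P1"
  have th: "0 < \<theta>" "\<theta> < 1" "1 - \<theta> = P / P2"
  proof -
    show "0 < \<theta>" using P by (simp add: \<theta>_def)
    have "P / P1 + P / P2 = P * (1 / P1 + 1 / P2)" by (simp add: field_simps)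
    also have "\<dots> = P * (1 / P)" using rr by simp
    also have "\<dots> = 1" using P by simp
    finally have e: "1 = P / P1 + P / P2" by simp
    thus "1 - \<theta> = P / P2" by (simp add: \<theta>_def)
    have "0 < P / P2" using P by simp
    thus "\<theta> < 1" using e by (simp add: \<theta>_def)
  qed
  define J1 where "J1 = (\<integral>\<^sup>+ x. epow (f x) P1 * indicator A x \<partial>M)"
  define J2 where "J2 = (\<integral>\<^sup>+ x. epow (g x) P2 * indicator A x \<partial>M)"
  have "(\<integral>\<^sup>+ x. epow (f x * g x) P * indicator A x \<partial>M)
     = (\<integral>\<^sup>+ x. epow (epow (f x) P1) \<theta> * epow (epow (g x) P2) (1 - \<theta>) * indicator A x \<partial>M)"
  proof (intro nn_integral_cong)
    fix x
    have "P1 * \<theta> = P" "P2 * (1 - \<theta>) = P" using P th by (simp_all add: \<theta>_def)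
    then show "epow (f x * g x) P * indicator A x
      = epow (epow (f x) P1) \<theta> * epow (epow (g x) P2) (1 - \<theta>) * indicator A x"
      using P th by (simp add: epow_epow epow_mult)
  qed
  also have "\<dots> \<le> epow J1 \<theta> * epow J2 (1 - \<theta>)"
    unfolding J1_def J2_def using th by (intro interp) auto
  finally have I: "(\<integral>\<^sup>+ x. epow (f x * g x) P * indicator A x \<partial>M) \<le> epow J1 \<theta> * epow J2 (1 - \<theta>)" .
  have "Lnorm M p A (\<lambda>x. f x * g x) = epow (\<integral>\<^sup>+ x. epow (f x * g x) P * indicator A x \<partial>M) (1 / P)"
    using fin by (simp add: Lnorm_fin P_def)
  also have "\<dots> \<le> epow (epow J1 \<theta> * epow J2 (1 - \<theta>)) (1 / P)"
    using I P by (intro epow_mono) auto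
  also have "\<dots> = epow J1 (1 / P1) * epow J2 (1 / P2)"
  proof -
    have "\<theta> * (1 / P) = 1 / P1" "(1 - \<theta>) * (1 / P) = 1 / P2" using P th by (simp_all add: \<theta>_def)
    then show ?thesis using P th by (simp add: epow_mult epow_epow)
  qed
  also have "\<dots> = Lnorm M p1 A f * Lnorm M p2 A g"
    using fin False by (simp add: Lnorm_fin J1_def J2_def P1_def P2_def)
  finally show ?thesis .
qed



definition mx :: "'a measure \<Rightarrow> 'a set set \<Rightarrow> ('a \<Rightarrow> ennreal) \<Rightarrow> 'a \<Rightarrow> ennreal" where
  "mx M \<U> \<phi> x = (SUP U\<in>\<U>. ennreal (1 / measure M U) * (\<integral>\<^sup>+ y. \<phi> y * indicator U y \<partial>M) * indicator U x)"

lemma maxop_mx: "maxop M \<U> f = mx M \<U> (\<lambda>y. ennreal \<bar>f y\<bar>)"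
  unfolding maxop_def mx_def by (simp add: Lnorm_one fun_eq_iff)

lemma basis_sets: "basis_of_sets M \<U> \<Longrightarrow> U \<in> \<U> \<Longrightarrow> U \<in> sets M"
  by (simp add: basis_of_sets_def)

lemma basis_countable: "basis_of_sets M \<U> \<Longrightarrow> countable \<U>"
  by (simp add: basis_of_sets_def)

lemma basis_emeasure: "basis_of_sets M \<U> \<Longrightarrow> U \<in> \<U> \<Longrightarrow> 0 < emeasure M U \<and> emeasure M U < top"
  by (simp add: basis_of_sets_def)

lemma basis_measure_pos: "basis_of_sets M \<U> \<Longrightarrow> U \<in> \<U> \<Longrightarrow> 0 < measure M U"
  unfolding measure_def using basis_emeasure[of M \<U> U] enn2real_positive_iff by blast

lemma basis_subset_space: "basis_of_sets M \<U> \<Longrightarrow> U \<in> \<U> \<Longrightarrow> U \<subseteq> space M"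
  using basis_sets sets.sets_into_space by blast

lemma mx_measurable[measurable]:
  assumes "basis_of_sets M \<U>"
  shows "mx M \<U> \<phi> \<in> borel_measurable M"
proof -
  have c: "countable \<U>" using assms by (rule basis_countable)
  have "(\<lambda>x. SUP U\<in>\<U>. ennreal (1 / measure M U) * (\<integral>\<^sup>+ y. \<phi> y * indicator U y \<partial>M) * indicator U x) \<in> borel_measurable M"
  proof (rule borel_measurable_SUP[OF c])
    fix U assume "U \<in> \<U>"
    hence [measurable]: "U \<in> sets M" using assms basis_sets by blast
    show "(\<lambda>x. ennreal (1 / measure M U) * (\<integral>\<^sup>+ y. \<phi> y * indicator U y \<partial>M) * indicator U x) \<in> borel_measurable M"
      by measurable
  qed
  then show ?thesis unfolding mx_def[abs_def] .
qed

lemma mx_cong_AE: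
  assumes "AE x in M. \<phi> x = \<psi> x"
  shows "mx M \<U> \<phi> = mx M \<U> \<psi>"
proof -
  have "\<And>U. (\<integral>\<^sup>+ y. \<phi> y * indicator U y \<partial>M) = (\<integral>\<^sup>+ y. \<psi> y * indicator U y \<partial>M)"
    by (rule nn_integral_cong_AE) (use assms in \<open>auto elim: eventually_mono\<close>)
  then show ?thesis unfolding mx_def by simp
qed

lemma mx_lower:
  assumes "U \<in> \<U>" "x \<in> U"
  shows "ennreal (1 / measure M U) * (\<integral>\<^sup>+ y. \<phi> y * indicator U y \<partial>M) \<le> mx M \<U> \<phi> x"
  unfolding mx_def using assms
  by (intro SUP_upper2[OF assms(1)]) simp

lemma ennreal_le_suminf: "f n \<le> (\<Sum>i. f i :: ennreal)"
  using sum_le_suminf[OF summableI, of "{n}" f] by simp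

lemma ennreal_suminf_head: "(\<Sum>i. f i :: ennreal) = f 0 + (\<Sum>i. f (Suc i))"
  using suminf_offset[of f 1] by (simp add: add.commute)

lemma mx_suminf_le:
  assumes [measurable]: "\<And>k. \<phi> k \<in> borel_measurable M" and B: "basis_of_sets M \<U>"
  shows "mx M \<U> (\<lambda>y. \<Sum>k. c k * \<phi> k y) x \<le> (\<Sum>k. c k * mx M \<U> (\<phi> k) x)"
  unfolding mx_def
proof (rule SUP_least)
  fix U assume U: "U \<in> \<U>"
  have [measurable]: "U \<in> sets M" using B U by (rule basis_sets)
  have "(\<integral>\<^sup>+ y. (\<Sum>k. c k * \<phi> k y) * indicator U y \<partial>M) = (\<integral>\<^sup>+ y. (\<Sum>k. c k * \<phi> k y * indicator U y) \<partial>M)"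
    by simp
  also have "\<dots> = (\<Sum>k. (\<integral>\<^sup>+ y. c k * \<phi> k y * indicator U y \<partial>M))"
    by (rule nn_integral_suminf) measurable
  finally have e: "(\<integral>\<^sup>+ y. (\<Sum>k. c k * \<phi> k y) * indicator U y \<partial>M) = (\<Sum>k. c k * (\<integral>\<^sup>+ y. \<phi> k y * indicator U y \<partial>M))"
    by (simp add: nn_integral_cmult mult.assoc)
  have "ennreal (1 / measure M U) * (\<integral>\<^sup>+ y. (\<Sum>k. c k * \<phi> k y) * indicator U y \<partial>M) * indicator U x
      = (\<Sum>k. c k * (ennreal (1 / measure M U) * (\<integral>\<^sup>+ y. \<phi> k y * indicator U y \<partial>M) * indicator U x))"
    unfolding e by (simp add: ennreal_suminf_cmult[symmetric] ennreal_suminf_multc[symmetric] mult.assoc mult.left_commute del: ennreal_suminf_cmult ennreal_suminf_multc)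
  also have "\<dots> \<le> (\<Sum>k. c k * (SUP U\<in>\<U>. ennreal (1 / measure M U) * (\<integral>\<^sup>+ y. \<phi> k y * indicator U y \<partial>M) * indicator U x))"
    by (intro suminf_le summableI mult_left_mono SUP_upper U) simp
  finally show "ennreal (1 / measure M U) * (\<integral>\<^sup>+ y. (\<Sum>k. c k * \<phi> k y) * indicator U y \<partial>M) * indicator U x
      \<le> (\<Sum>k. c k * (SUP U\<in>\<U>. ennreal (1 / measure M U) * (\<integral>\<^sup>+ y. \<phi> k y * indicator U y \<partial>M) * indicator U x))" .
qed



lemma nn_integral_space_ind: "(\<integral>\<^sup>+ x. g x * indicator (space M) x \<partial>M) = (\<integral>\<^sup>+ x. g x \<partial>M)"
  by (rule nn_integral_cong) simp

lemma mx_bound: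
  assumes B: "basis_of_sets M \<U>" and t: "0 < t"
    and mb: "maxop_bounded M \<U> (ennreal t) a b"
    and [measurable]: "a \<in> borel_measurable M" and apos: "\<And>x. x \<in> space M \<Longrightarrow> 0 < a x"
  obtains C :: real where "C > 0" "\<And>\<phi>. \<phi> \<in> borel_measurable M \<Longrightarrow>
      (\<integral>\<^sup>+x. epow (\<phi> x * ennreal (a x)) t \<partial>M) \<noteq> top \<Longrightarrow>
      (\<integral>\<^sup>+x. epow (mx M \<U> \<phi> x * ennreal (b x)) t \<partial>M) \<le> ennreal C * (\<integral>\<^sup>+x. epow (\<phi> x * ennreal (a x)) t \<partial>M)"
proof -
  from mb obtain C0 :: real where H: "\<And>f. f \<in> Lpw M (ennreal t) a \<Longrightarrow>
      Lnorm M (ennreal t) (space M) (\<lambda>x. maxop M \<U> f x * ennreal (b x)) \<le> ennreal C0 * wnorm M (ennreal t) a f"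
    unfolding maxop_bounded_def by blast
  define C where "C = (max C0 0) powr t + 1"
  have Cpos: "C > 0" unfolding C_def by (simp add: add_nonneg_pos)
  have tt: "ennreal t \<noteq> top" "enn2real (ennreal t) = t" using t by auto
  show ?thesis
  proof (rule that[OF Cpos])
    fix \<phi> :: "'a \<Rightarrow> ennreal"
    assume [measurable]: "\<phi> \<in> borel_measurable M"
      and fin: "(\<integral>\<^sup>+x. epow (\<phi> x * ennreal (a x)) t \<partial>M) \<noteq> top"
    define I where "I = (\<integral>\<^sup>+x. epow (\<phi> x * ennreal (a x)) t \<partial>M)"
    define f where "f = (\<lambda>x. enn2real (\<phi> x))"
    have [measurable]: "f \<in> borel_measurable M" unfolding f_def by measurable
    have "AE x in M. epow (\<phi> x * ennreal (a x)) t \<noteq> top"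
      using nn_integral_PInf_AE[of "\<lambda>x. epow (\<phi> x * ennreal (a x)) t" M] fin by simp
    hence AEfin: "AE x in M. \<phi> x \<noteq> top"
    proof (elim AE_mp, intro AE_I2 impI)
      fix x assume x: "x \<in> space M" and h: "epow (\<phi> x * ennreal (a x)) t \<noteq> top"
      show "\<phi> x \<noteq> top"
      proof
        assume "\<phi> x = top"
        then have "\<phi> x * ennreal (a x) = top" using apos[OF x] by simp
        then show False using h by simp
      qed
    qed
    have eqAE: "AE x in M. ennreal \<bar>f x\<bar> = \<phi> x"
      using AEfin by (elim eventually_mono) (simp add: f_def ennreal_enn2real_if)
    have wn: "wnorm M (ennreal t) a f = epow I (1 / t)"
    proof -
      have "(\<integral>\<^sup>+ x. epow (ennreal (\<bar>f x\<bar> * a x)) t * indicator (space M) x \<partial>M) = I"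
        unfolding nn_integral_space_ind I_def
      proof (rule nn_integral_cong_AE)
        show "AE x in M. epow (ennreal (\<bar>f x\<bar> * a x)) t = epow (\<phi> x * ennreal (a x)) t"
          using eqAE
        proof (elim AE_mp, intro AE_I2 impI)
          fix x assume x: "x \<in> space M" and h: "ennreal \<bar>f x\<bar> = \<phi> x"
          have "ennreal (\<bar>f x\<bar> * a x) = ennreal \<bar>f x\<bar> * ennreal (a x)"
            using apos[OF x] by (simp add: ennreal_mult)
          then show "epow (ennreal (\<bar>f x\<bar> * a x)) t = epow (\<phi> x * ennreal (a x)) t" using h by simp
        qed
      qed
      then show ?thesis unfolding wnorm_def using tt by (simp add: Lnorm_fin)
    qed
    have "epow I (1 / t) < top" using fin unfolding I_def by (simp add: top.not_eq_extremum)
    hence fL: "f \<in> Lpw M (ennreal t) a"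
      unfolding Lpw_def using wn by simp
    have mxe: "maxop M \<U> f = mx M \<U> \<phi>"
      unfolding maxop_mx by (rule mx_cong_AE[OF eqAE])
    have "Lnorm M (ennreal t) (space M) (\<lambda>x. mx M \<U> \<phi> x * ennreal (b x)) \<le> ennreal C0 * epow I (1 / t)"
      using H[OF fL] unfolding mxe wn .
    hence "epow (\<integral>\<^sup>+x. epow (mx M \<U> \<phi> x * ennreal (b x)) t \<partial>M) (1 / t) \<le> ennreal C0 * epow I (1 / t)"
      using tt by (simp add: Lnorm_fin nn_integral_space_ind)
    hence "epow (epow (\<integral>\<^sup>+x. epow (mx M \<U> \<phi> x * ennreal (b x)) t \<partial>M) (1 / t)) t \<le> epow (ennreal C0 * epow I (1 / t)) t"
      using t by (intro epow_mono) auto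
    hence "(\<integral>\<^sup>+x. epow (mx M \<U> \<phi> x * ennreal (b x)) t \<partial>M) \<le> epow (ennreal C0) t * I"
      using t by (simp add: epow_epow epow_mult)
    also have "epow (ennreal C0) t \<le> ennreal C"
    proof -
      have e: "ennreal (max C0 0) = ennreal C0" by (cases "0 \<le> C0") (simp_all add: max_def ennreal_neg)
      have "epow (ennreal C0) t = epow (ennreal (max C0 0)) t" unfolding e ..
      also have "\<dots> = ennreal (max C0 0 powr t)" by (rule epow_ennreal) simp
      finally have "epow (ennreal C0) t = ennreal (max C0 0 powr t)" .
      also have "\<dots> \<le> ennreal C" unfolding C_def by (intro ennreal_leI) simp
      finally show ?thesis .
    qed
    hence "epow (ennreal C0) t * I \<le> ennreal C * I" by (rule mult_right_mono) simp
    finally show "(\<integral>\<^sup>+x. epow (mx M \<U> \<phi> x * ennreal (b x)) t \<partial>M) \<le> ennreal C * (\<integral>\<^sup>+x. epow (\<phi> x * ennreal (a x)) t \<partial>M)"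
      unfolding I_def .
  qed
qed



lemma powr_power_swap: "0 < x \<Longrightarrow> (x ^ n) powr t = (x powr t) ^ n" for x :: real
  by (simp add: powr_power powr_powr mult.commute flip: powr_realpow)

lemma suminf_epow_le:
  assumes t: "0 < t"
  shows "epow (\<Sum>k. f k) t \<le> (\<Sum>k. epow (ennreal (2 ^ Suc k) * f k) t)"
proof -
  define X where "X = (\<Sum>k. epow (ennreal (2 ^ Suc k) * f k) t)"
  define Y where "Y = epow X (1 / t)"
  have XY: "epow Y t = X" unfolding Y_def using t by (simp add: epow_epow)
  have fk: "f k \<le> ennreal ((1/2) ^ Suc k) * Y" for k
  proof -
    have "epow (ennreal (2 ^ Suc k) * f k) t \<le> epow Y t"
      unfolding XY X_def by (rule ennreal_le_suminf)
    hence le: "ennreal (2 ^ Suc k) * f k \<le> Y" using epow_le_iff[OF t] by blast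
    have "f k = ennreal ((1/2) ^ Suc k) * (ennreal (2 ^ Suc k) * f k)"
      by (simp add: mult.assoc[symmetric] ennreal_mult[symmetric] power_mult_distrib[symmetric] del: ennreal_plus)
    also have "\<dots> \<le> ennreal ((1/2) ^ Suc k) * Y" by (rule mult_left_mono[OF le]) simp
    finally show ?thesis .
  qed
  have "(\<Sum>k. f k) \<le> (\<Sum>k. ennreal ((1/2) ^ Suc k) * Y)"
    by (intro suminf_le summableI fk)
  also have "\<dots> = (\<Sum>k. ennreal ((1/2) ^ Suc k)) * Y"
    by (rule ennreal_suminf_multc)
  also have "(\<Sum>k. ennreal ((1/2::real) ^ Suc k)) = 1"
  proof -
    have "(\<Sum>k. ennreal ((1/2::real) ^ Suc k)) = ennreal (\<Sum>k. (1/2::real) ^ Suc k)"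
      by (rule suminf_ennreal2) (auto intro: sums_summable[OF power_half_series])
    also have "(\<Sum>k. (1/2::real) ^ Suc k) = 1" using sums_unique[OF power_half_series] by simp
    finally show ?thesis by simp
  qed
  finally have "(\<Sum>k. f k) \<le> Y" by simp
  hence "epow (\<Sum>k. f k) t \<le> epow Y t" using t by (intro epow_mono) auto
  then show ?thesis unfolding XY X_def .
qed



lemma rdf:
  assumes B: "basis_of_sets M \<U>" and t: "0 < t"
    and [measurable]: "a \<in> borel_measurable M" "b \<in> borel_measurable M"
    and apos: "\<And>x. x \<in> space M \<Longrightarrow> 0 < a x" and bpos: "\<And>x. x \<in> space M \<Longrightarrow> 0 < b x"
    and C: "C > 0"
    and bound: "\<And>\<phi>. \<phi> \<in> borel_measurable M \<Longrightarrow>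
      (\<integral>\<^sup>+x. epow (\<phi> x * ennreal (a x)) t \<partial>M) \<noteq> top \<Longrightarrow>
      (\<integral>\<^sup>+x. epow (mx M \<U> \<phi> x * ennreal (b x)) t \<partial>M) \<le> ennreal C * (\<integral>\<^sup>+x. epow (\<phi> x * ennreal (a x)) t \<partial>M)"
    and [measurable]: "g \<in> borel_measurable M"
    and gfin: "(\<integral>\<^sup>+x. epow (g x * ennreal (a x)) t \<partial>M) \<noteq> top"
  obtains \<Phi> L where "\<Phi> \<in> borel_measurable M" "\<And>x. x \<in> space M \<Longrightarrow> g x \<le> \<Phi> x"
    "(\<integral>\<^sup>+x. epow (\<Phi> x * ennreal (a x)) t \<partial>M) \<noteq> top" "L > 0"
    "\<And>U x. U \<in> \<U> \<Longrightarrow> x \<in> U \<Longrightarrow>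
       ennreal (1 / measure M U) * (\<integral>\<^sup>+y. \<Phi> y * indicator U y \<partial>M) * ennreal (b x / a x) \<le> ennreal L * \<Phi> x"
proof -
  define r where "r = (\<lambda>x. ennreal (b x / a x))"
  have [measurable]: "r \<in> borel_measurable M" unfolding r_def by measurable
  define T where "T = (\<lambda>\<phi> x. mx M \<U> \<phi> x * r x)"
  have Tm[measurable]: "T \<phi> \<in> borel_measurable M" for \<phi>
    unfolding T_def using mx_measurable[OF B] by measurable
  have Tb: "(\<integral>\<^sup>+x. epow (T \<phi> x * ennreal (a x)) t \<partial>M) \<le> ennreal C * (\<integral>\<^sup>+x. epow (\<phi> x * ennreal (a x)) t \<partial>M)"
    if [measurable]: "\<phi> \<in> borel_measurable M" and fin: "(\<integral>\<^sup>+x. epow (\<phi> x * ennreal (a x)) t \<partial>M) \<noteq> top" for \<phi>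
  proof -
    have "(\<integral>\<^sup>+x. epow (T \<phi> x * ennreal (a x)) t \<partial>M) = (\<integral>\<^sup>+x. epow (mx M \<U> \<phi> x * ennreal (b x)) t \<partial>M)"
    proof (rule nn_integral_cong)
      fix x assume x: "x \<in> space M"
      have "r x * ennreal (a x) = ennreal (b x)"
        unfolding r_def using apos[OF x] bpos[OF x] by (simp add: ennreal_mult[symmetric])
      then show "epow (T \<phi> x * ennreal (a x)) t = epow (mx M \<U> \<phi> x * ennreal (b x)) t"
        unfolding T_def by (simp add: mult.assoc)
    qed
    also have "\<dots> \<le> ennreal C * (\<integral>\<^sup>+x. epow (\<phi> x * ennreal (a x)) t \<partial>M)"
      by (rule bound) (use fin in auto)
    finally show ?thesis .
  qed
  define h where "h = (\<lambda>k. (T ^^ k) g)"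
  have h0: "h 0 = g" and hS: "h (Suc k) = T (h k)" for k unfolding h_def by simp_all
  have hm[measurable]: "h k \<in> borel_measurable M" for k
    by (cases k) (simp_all add: h0 hS)
  define I0 where "I0 = (\<integral>\<^sup>+x. epow (g x * ennreal (a x)) t \<partial>M)"
  have hb: "(\<integral>\<^sup>+x. epow (h k x * ennreal (a x)) t \<partial>M) \<le> ennreal (C ^ k) * I0" for k
  proof (induction k)
    case 0
    then show ?case by (simp add: h0 I0_def)
  next
    case (Suc k)
    have fin: "(\<integral>\<^sup>+x. epow (h k x * ennreal (a x)) t \<partial>M) \<noteq> top"
      using Suc.IH gfin unfolding I0_def
      by (metis ennreal_mult_eq_top_iff ennreal_neq_top neq_top_trans)
    have "(\<integral>\<^sup>+x. epow (h (Suc k) x * ennreal (a x)) t \<partial>M) \<le> ennreal C * (\<integral>\<^sup>+x. epow (h k x * ennreal (a x)) t \<partial>M)"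
      unfolding hS by (rule Tb[OF hm fin])
    also have "\<dots> \<le> ennreal C * (ennreal (C ^ k) * I0)"
      by (rule mult_left_mono[OF Suc.IH]) simp
    also have "\<dots> = ennreal (C ^ Suc k) * I0"
      using C by (simp add: ennreal_mult mult.assoc)
    finally show ?case .
  qed
  define L where "L = 2 * (2 * C) powr (1 / t)"
  have Lpos: "L > 0" unfolding L_def using C by simp
  define A where "A = (2::real) powr t"
  have Apos: "A > 0" unfolding A_def by simp
  have Lt: "L powr t = A * (2 * C)"
    unfolding L_def A_def using C t by (simp add: powr_mult powr_powr)
  have ek: "((2::real) ^ Suc k * (1 / L) ^ k) powr t * C ^ k = A * (1/2) ^ k" for k
  proof -
    have "((2::real) ^ Suc k * (1 / L) ^ k) powr t = (A ^ Suc k) * ((1 / L) powr t) ^ k"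
      unfolding A_def using Lpos by (simp add: powr_mult powr_power_swap del: power_Suc)
    also have "(1 / L) powr t = 1 / (A * (2 * C))" using Lpos by (simp add: powr_divide Lt)
    finally have e1: "((2::real) ^ Suc k * (1 / L) ^ k) powr t = A ^ Suc k * (1 / (A * (2 * C))) ^ k" .
    have "A ^ Suc k * (1 / (A * (2 * C))) ^ k * C ^ k = A * (A * (1 / (A * (2 * C))) * C) ^ k"
      unfolding power_mult_distrib power_Suc by (simp add: ac_simps)
    hence "((2::real) ^ Suc k * (1 / L) ^ k) powr t * C ^ k = A * (A * (1 / (A * (2 * C))) * C) ^ k"
      unfolding e1 .
    also have "A * (1 / (A * (2 * C))) * C = 1 / 2" using Apos C by (simp add: field_simps)
    finally show ?thesis .
  qed
  define c where "c = (\<lambda>k. ennreal ((1 / L) ^ k))"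
  define \<Phi> where "\<Phi> = (\<lambda>x. \<Sum>k. c k * h k x)"
  have \<Phi>m[measurable]: "\<Phi> \<in> borel_measurable M" unfolding \<Phi>_def by measurable
  have g\<Phi>: "g x \<le> \<Phi> x" for x
    using ennreal_le_suminf[of "\<lambda>k. c k * h k x" 0] unfolding \<Phi>_def by (simp add: c_def h0)
  have "(\<integral>\<^sup>+x. epow (\<Phi> x * ennreal (a x)) t \<partial>M)
      \<le> (\<integral>\<^sup>+x. (\<Sum>k. ennreal (((2::real) ^ Suc k * (1 / L) ^ k) powr t) * epow (h k x * ennreal (a x)) t) \<partial>M)"
  proof (rule nn_integral_mono)
    fix x
    have "epow (\<Phi> x * ennreal (a x)) t = epow (\<Sum>k. c k * h k x * ennreal (a x)) t"
      unfolding \<Phi>_def by simp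
    also have "\<dots> \<le> (\<Sum>k. epow (ennreal (2 ^ Suc k) * (c k * h k x * ennreal (a x))) t)"
      by (rule suminf_epow_le[OF t])
    also have "\<dots> = (\<Sum>k. ennreal (((2::real) ^ Suc k * (1 / L) ^ k) powr t) * epow (h k x * ennreal (a x)) t)"
    proof (rule suminf_cong)
      fix k
      have "ennreal (2 ^ Suc k) * (c k * h k x * ennreal (a x)) = ennreal ((2::real) ^ Suc k * (1 / L) ^ k) * (h k x * ennreal (a x))"
        unfolding c_def using Lpos by (simp add: ennreal_mult mult.assoc del: power_Suc)
      then show "epow (ennreal (2 ^ Suc k) * (c k * h k x * ennreal (a x))) t
          = ennreal (((2::real) ^ Suc k * (1 / L) ^ k) powr t) * epow (h k x * ennreal (a x)) t"
        using t Lpos by (simp add: epow_mult epow_ennreal del: power_Suc)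
    qed
    finally show "epow (\<Phi> x * ennreal (a x)) t
      \<le> (\<Sum>k. ennreal (((2::real) ^ Suc k * (1 / L) ^ k) powr t) * epow (h k x * ennreal (a x)) t)" .
  qed
  also have "\<dots> = (\<Sum>k. ennreal (((2::real) ^ Suc k * (1 / L) ^ k) powr t) * (\<integral>\<^sup>+x. epow (h k x * ennreal (a x)) t \<partial>M))"
    by (subst nn_integral_suminf) (auto simp: nn_integral_cmult)
  also have "\<dots> \<le> (\<Sum>k. ennreal (((2::real) ^ Suc k * (1 / L) ^ k) powr t) * (ennreal (C ^ k) * I0))"
    by (intro suminf_le summableI mult_left_mono hb) simp
  also have "\<dots> = (\<Sum>k. ennreal (A * (1/2) ^ k) * I0)"
    by (rule suminf_cong) (use C in \<open>simp add: mult.assoc[symmetric] ennreal_mult[symmetric] ek del: ennreal_plus power_Suc\<close>)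
  also have "\<dots> = (\<Sum>k. ennreal (A * (1/2) ^ k)) * I0" by (rule ennreal_suminf_multc)
  also have "(\<Sum>k. ennreal (A * (1/2) ^ k)) = ennreal (\<Sum>k. A * (1/2) ^ k)"
    using Apos by (intro suminf_ennreal2 summable_mult summable_geometric) auto
  finally have \<Phi>fin: "(\<integral>\<^sup>+x. epow (\<Phi> x * ennreal (a x)) t \<partial>M) \<noteq> top"
    using gfin unfolding I0_def by (auto simp: ennreal_mult_eq_top_iff top_unique)
  have T\<Phi>: "T \<Phi> x \<le> ennreal L * \<Phi> x" for x
  proof -
    have "T \<Phi> x \<le> (\<Sum>k. c k * mx M \<U> (h k) x) * r x"
      unfolding T_def \<Phi>_def by (intro mult_right_mono mx_suminf_le[OF hm B]) simp
    also have "\<dots> = (\<Sum>k. c k * h (Suc k) x)"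
      unfolding hS T_def by (simp add: mult.assoc flip: ennreal_suminf_multc)
    also have "\<dots> = ennreal L * (\<Sum>k. c (Suc k) * h (Suc k) x)"
    proof -
      have "\<And>k. c k * h (Suc k) x = ennreal L * (c (Suc k) * h (Suc k) x)"
        unfolding c_def using Lpos by (simp add: mult.assoc[symmetric] ennreal_mult[symmetric] del: ennreal_plus)
      then show ?thesis by simp
    qed
    also have "\<dots> \<le> ennreal L * \<Phi> x"
      unfolding \<Phi>_def by (intro mult_left_mono) (simp_all add: ennreal_suminf_head[of "\<lambda>k. c k * h k x"])
    finally show ?thesis .
  qed
  show ?thesis
  proof (rule that[OF \<Phi>m _ \<Phi>fin Lpos])
    show "g x \<le> \<Phi> x" for x by (rule g\<Phi>)
    fix U x assume U: "U \<in> \<U>" and x: "x \<in> U"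
    have "ennreal (1 / measure M U) * (\<integral>\<^sup>+y. \<Phi> y * indicator U y \<partial>M) * ennreal (b x / a x) \<le> T \<Phi> x"
      unfolding T_def r_def by (intro mult_right_mono mx_lower U x) simp
    also have "\<dots> \<le> ennreal L * \<Phi> x" by (rule T\<Phi>)
    finally show "ennreal (1 / measure M U) * (\<integral>\<^sup>+y. \<Phi> y * indicator U y \<partial>M) * ennreal (b x / a x) \<le> ennreal L * \<Phi> x" .
  qed
qed



lemma rcp_pos_fin: "0 < rcp p \<Longrightarrow> p \<noteq> top"
  by auto

lemma ennreal_rcp: "0 < x \<Longrightarrow> rcp (ennreal x) = 1 / x"
  using rcp_fin[of "ennreal x"] by simp

lemma exps:
  assumes pos: "0 < S" "0 < R" "0 < S0" "0 < R0" and e: "0 < e"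
    and r1: "rcp S - rcp S0 = e" and r2: "rcp R0 - rcp R = e"
  shows "S \<noteq> top" "R0 \<noteq> top" "0 < enn2real S" "0 < alpha_exp S0 R0"
    "0 < enn2real S * e" "enn2real S * e \<le> 1"
    "enn2real S * e = 1 \<longleftrightarrow> S0 = top"
    "rcp S + rcp R = 1 / alpha_exp S0 R0" "rcp S0 + rcp R0 = 1 / alpha_exp S0 R0"
    "1 - enn2real S * e = enn2real S * rcp S0"
    "enn2real S * e < 1 \<Longrightarrow> S0 * ennreal (1 - enn2real S * e) = S"
    "enn2real S * e = 1 \<Longrightarrow> R0 * ennreal (1 / alpha_exp S0 R0) = 1"
    "rcp R0 = (1 - enn2real S * e) * rcp R + enn2real S * e / alpha_exp S0 R0"
proof -
  have nn: "0 \<le> rcp S0" "0 \<le> rcp R" by (simp_all add: rcp_nonneg)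
  show S: "S \<noteq> top" using r1 e nn by (intro rcp_pos_fin) linarith
  show R0: "R0 \<noteq> top" using r2 e nn by (intro rcp_pos_fin) linarith
  define Sr where "Sr = enn2real S"
  show Sr: "0 < enn2real S" using S pos by (simp add: enn2real_pos)
  have rS: "rcp S = 1 / Sr" unfolding Sr_def using rcp_fin[OF pos(1) S] .
  have aa: "rcp S0 + rcp R0 > 0" using r2 e nn by linarith
  show al: "0 < alpha_exp S0 R0" unfolding alpha_exp_def using aa by simp
  have ia: "1 / alpha_exp S0 R0 = rcp S0 + rcp R0" unfolding alpha_exp_def using aa by simp
  show "rcp S0 + rcp R0 = 1 / alpha_exp S0 R0" using ia by simp
  show "rcp S + rcp R = 1 / alpha_exp S0 R0" using ia r1 r2 by simp
  show q0: "0 < enn2real S * e" using Sr e by simp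
  have q1: "1 - Sr * e = Sr * rcp S0"
  proof -
    have "Sr * rcp S = 1" using rS Sr unfolding Sr_def by simp
    thus ?thesis using r1 by (simp add: algebra_simps)
  qed
  thus "1 - enn2real S * e = enn2real S * rcp S0" by (simp add: Sr_def)
  show "enn2real S * e \<le> 1" using q1 nn Sr unfolding Sr_def by (smt (verit) mult_nonneg_nonneg)
  show "enn2real S * e = 1 \<longleftrightarrow> S0 = top"
    using q1 Sr rcp_eq_0_iff[OF pos(3)] unfolding Sr_def by auto
  show "enn2real S * e < 1 \<Longrightarrow> S0 * ennreal (1 - enn2real S * e) = S"
  proof -
    assume "enn2real S * e < 1"
    hence "rcp S0 > 0" using q1 Sr unfolding Sr_def by (smt (verit) mult_nonneg_nonneg nn(1) mult_eq_0_iff)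
    hence S0f: "S0 \<noteq> top" by auto
    have e1: "ennreal (enn2real S0) = S0" using S0f by (simp add: ennreal_enn2real_if)
    have e2: "ennreal (enn2real S) = S" using S by (simp add: ennreal_enn2real_if)
    have re: "enn2real S0 * (1 - enn2real S * e) = enn2real S"
      using q1 rcp_fin[OF pos(3) S0f] enn2real_pos[OF pos(3) S0f] unfolding Sr_def by simp
    have "ennreal (enn2real S0) * ennreal (1 - enn2real S * e) = ennreal (enn2real S0 * (1 - enn2real S * e))"
      by (rule ennreal_mult[symmetric]) (use \<open>enn2real S * e < 1\<close> in simp_all)
    then show ?thesis unfolding e1 re e2 .
  qed
  show "enn2real S * e = 1 \<Longrightarrow> R0 * ennreal (1 / alpha_exp S0 R0) = 1"
  proof -
    assume "enn2real S * e = 1"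
    hence "S0 = top" using q1 Sr rcp_eq_0_iff[OF pos(3)] unfolding Sr_def by auto
    hence "1 / alpha_exp S0 R0 = 1 / enn2real R0" using ia rcp_fin[OF pos(4) R0] by simp
    moreover have e1: "ennreal (enn2real R0) = R0" using R0 by (simp add: ennreal_enn2real_if)
    moreover have "ennreal (enn2real R0) * ennreal (1 / enn2real R0) = ennreal (enn2real R0 * (1 / enn2real R0))"
      by (rule ennreal_mult[symmetric]) simp_all
    moreover have "enn2real R0 * (1 / enn2real R0) = 1" using enn2real_pos[OF pos(4) R0] by simp
    ultimately show ?thesis by simp
  qed
  show "rcp R0 = (1 - enn2real S * e) * rcp R + enn2real S * e / alpha_exp S0 R0"
  proof -
    have "Sr * rcp S0 + Sr * e = 1" using q1 by simp
    have r0: "rcp R0 = rcp R + e" using r2 by simp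
    have "(1 - Sr * e) * rcp R + Sr * e * (rcp S0 + rcp R0) = Sr * rcp S0 * rcp R + Sr * e * (rcp S0 + (rcp R + e))"
      using q1 r0 by simp
    also have "\<dots> = (Sr * rcp S0 + Sr * e) * (rcp R + e)" by (simp add: algebra_simps)
    also have "\<dots> = rcp R0" using \<open>Sr * rcp S0 + Sr * e = 1\<close> r0 by simp
    finally show ?thesis using ia unfolding Sr_def by (simp add: divide_inverse)
  qed
qed



lemma real_id:
  fixes m A L \<alpha> q :: real
  assumes "0 < m" "0 < A" "0 < L" "0 < \<alpha>"
  shows "m powr (-(1/\<alpha>)) * ((A / L) powr (1/\<alpha>)) powr (-q) * (A * m) powr (q/\<alpha>)
       = L powr (q/\<alpha>) * (m powr (-(1/\<alpha>))) powr (1 - q)"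
proof -
  have "((A / L) powr (1/\<alpha>)) powr (-q) = (A / L) powr (-(q/\<alpha>))"
    by (simp add: powr_powr)
  also have "\<dots> = A powr (-(q/\<alpha>)) / L powr (-(q/\<alpha>))" by (rule powr_divide)
  also have "L powr (-(q/\<alpha>)) = inverse (L powr (q/\<alpha>))" by (rule powr_minus)
  finally have "((A / L) powr (1/\<alpha>)) powr (-q) = A powr (-(q/\<alpha>)) * L powr (q/\<alpha>)"
    by (simp add: divide_inverse)
  moreover have "(A * m) powr (q/\<alpha>) = A powr (q/\<alpha>) * m powr (q/\<alpha>)" using assms by (simp add: powr_mult)
  moreover have "(m powr (-(1/\<alpha>))) powr (1 - q) = m powr (-(1/\<alpha>)) * m powr (q/\<alpha>)"
  proof -
    have ex: "-(1/\<alpha>) * (1-q) = -(1/\<alpha>) + q/\<alpha>" using assms by (simp add: field_simps)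
    have "(m powr (-(1/\<alpha>))) powr (1 - q) = m powr (-(1/\<alpha>) * (1-q))" by (rule powr_powr)
    also have "\<dots> = m powr (-(1/\<alpha>) + q/\<alpha>)" unfolding ex ..
    also have "\<dots> = m powr (-(1/\<alpha>)) * m powr (q/\<alpha>)" by (rule powr_add)
    finally show ?thesis .
  qed
  moreover have "A powr (-(q/\<alpha>)) * A powr (q/\<alpha>) = 1"
    using assms by (simp add: powr_add[symmetric])
  ultimately show ?thesis
    by (simp add: algebra_simps)
qed

lemma recip_id:
  fixes P V \<alpha> q :: real
  assumes "0 < P" "0 < V" "0 < \<alpha>"
  shows "1 / (V * (P powr (1/\<alpha>) * V) powr (-q)) = (1 / V) powr (1 - q) * P powr (q / \<alpha>)"
proof -
  have "(P powr (1/\<alpha>) * V) powr (-q) = P powr (-(q/\<alpha>)) * V powr (-q)"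
    using assms by (simp add: powr_mult powr_powr)
  hence "1 / (V * (P powr (1/\<alpha>) * V) powr (-q)) = P powr (q/\<alpha>) * (1 / (V * V powr (-q)))"
    using assms by (simp add: powr_minus field_simps)
  moreover have "1 / (V * V powr (-q)) = (1 / V) powr (1 - q)"
    using assms by (simp add: powr_divide powr_diff powr_minus field_simps)
  ultimately show ?thesis by simp
qed



lemma Lnorm_mono_space:
  assumes "g \<in> borel_measurable M" "g' \<in> borel_measurable M" "A \<in> sets M" "0 < p"
    and "\<And>x. x \<in> space M \<Longrightarrow> x \<in> A \<Longrightarrow> g x \<le> g' x"
  shows "Lnorm M p A g \<le> Lnorm M p A g'"
  using assms by (intro Lnorm_mono) (auto intro: AE_I2)

lemma perU:
  assumes pos: "0 < S" "0 < R" "0 < S0" "0 < R0" and e: "0 < e"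
    and r1: "rcp S - rcp S0 = e" and r2: "rcp R0 - rcp R = e"
    and q_def: "q = enn2real S * e" and \<alpha>_def: "\<alpha> = alpha_exp S0 R0"
    and U[measurable]: "U \<in> sets M" and mpos: "0 < measure M U"
    and [measurable]: "W \<in> borel_measurable M" "V \<in> borel_measurable M"
    and Wp: "\<And>x. x \<in> space M \<Longrightarrow> 0 < W x" and Vp: "\<And>x. x \<in> space M \<Longrightarrow> 0 < V x"
    and [measurable]: "\<Phi>r \<in> borel_measurable M" and \<Phi>p: "\<And>x. x \<in> space M \<Longrightarrow> 0 < \<Phi>r x"
    and [measurable]: "\<Psi> \<in> borel_measurable M"
    and \<Psi>def: "\<And>x. x \<in> space M \<Longrightarrow> \<Psi> x = \<Phi>r x powr (1/\<alpha>) * V x"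
    and Apos: "0 < A" and Lpos: "0 < L" and cU_def: "cU = (A / L) powr (1/\<alpha>)"
    and low: "AE x in M. x \<in> U \<longrightarrow> cU * W x \<le> \<Psi> x"
    and AU: "(\<integral>\<^sup>+x. ennreal (\<Phi>r x) * indicator U x \<partial>M) = ennreal (A * measure M U)"
    and nS: "Lnorm M S U (\<lambda>x. ennreal (W x)) = ennreal nS" "0 \<le> nS"
    and nR: "Lnorm M R U (\<lambda>x. ennreal (1 / V x)) = ennreal nR" "0 \<le> nR"
  shows "ennreal (measure M U powr (-(rcp S0 + rcp R0))) * Lnorm M S0 U (\<lambda>x. ennreal (W x * \<Psi> x powr (-q)))
     * Lnorm M R0 U (\<lambda>x. ennreal (1 / (V x * \<Psi> x powr (-q))))
   \<le> ennreal (L powr (q/\<alpha>) * (if q < 1 then (measure M U powr (-(1/\<alpha>)) * nS * nR) powr (1-q) else 1))"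
proof -
  note ex = exps[OF pos e r1 r2, folded q_def \<alpha>_def]
  have al: "0 < \<alpha>" and q0: "0 < q" and q1: "q \<le> 1" using ex by auto
  have cU: "0 < cU" unfolding cU_def using Apos Lpos by simp
  define mU where "mU = measure M U"
  have Us: "U \<subseteq> space M" using U sets.sets_into_space by blast
  define x1 where "x1 = (if q < 1 then nS powr (1 - q) else 1)"
  define x2 where "x2 = (if q < 1 then nR powr (1 - q) else 1)"
  have wb: "W x * \<Psi> x powr (-q) \<le> cU powr (-q) * W x powr (1 - q)"
    if x: "x \<in> space M" and le: "cU * W x \<le> \<Psi> x" for x
  proof -
    have "\<Psi> x powr (-q) \<le> (cU * W x) powr (-q)"
      using le cU Wp[OF x] q0 by (intro powr_mono2') auto
    also have "\<dots> = cU powr (-q) * W x powr (-q)" by (rule powr_mult)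
    finally have "W x * \<Psi> x powr (-q) \<le> W x * (cU powr (-q) * W x powr (-q))"
      using Wp[OF x] by (intro mult_left_mono) auto
    also have "\<dots> = cU powr (-q) * W x powr (1 - q)"
      using Wp[OF x] by (simp add: powr_diff powr_minus field_simps)
    finally show ?thesis .
  qed
  have F1: "Lnorm M S0 U (\<lambda>x. ennreal (W x * \<Psi> x powr (-q))) \<le> ennreal (cU powr (-q) * x1)"
  proof (cases "q < 1")
    case True
    have S0f: "S0 * ennreal (1 - q) = S" using ex True by simp
    have "Lnorm M S0 U (\<lambda>x. ennreal (W x * \<Psi> x powr (-q)))
        \<le> Lnorm M S0 U (\<lambda>x. ennreal (cU powr (-q)) * epow (ennreal (W x)) (1 - q))"
    proof (rule Lnorm_mono)
      show "AE x in M. x \<in> U \<longrightarrow> ennreal (W x * \<Psi> x powr (-q)) \<le> ennreal (cU powr (-q)) * epow (ennreal (W x)) (1 - q)"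
        using low
      proof (elim AE_mp, intro AE_I2 impI)
        fix x assume x: "x \<in> space M" and l: "x \<in> U \<longrightarrow> cU * W x \<le> \<Psi> x" and xU: "x \<in> U"
        have "ennreal (W x * \<Psi> x powr (-q)) \<le> ennreal (cU powr (-q) * W x powr (1 - q))"
          using wb[OF x] l xU by (intro ennreal_leI) auto
        also have "\<dots> = ennreal (cU powr (-q)) * epow (ennreal (W x)) (1 - q)"
          using Wp[OF x] by (simp add: epow_ennreal ennreal_mult)
        finally show "ennreal (W x * \<Psi> x powr (-q)) \<le> ennreal (cU powr (-q)) * epow (ennreal (W x)) (1 - q)" .
      qed
    qed (use pos in auto)
    also have "\<dots> \<le> ennreal (cU powr (-q)) * Lnorm M S0 U (\<lambda>x. epow (ennreal (W x)) (1 - q))"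
      using pos by (intro Lnorm_cmult_le) auto
    also have "\<dots> \<le> ennreal (cU powr (-q)) * epow (Lnorm M (S0 * ennreal (1 - q)) U (\<lambda>x. ennreal (W x))) (1 - q)"
      using pos True by (intro mult_left_mono Lnorm_pow_le) auto
    also have "\<dots> = ennreal (cU powr (-q)) * ennreal (nS powr (1 - q))" unfolding S0f nS(1) using nS(2) by (simp add: epow_ennreal)
    also have "\<dots> = ennreal (cU powr (-q) * x1)" using True unfolding x1_def
      by (simp add: ennreal_mult[symmetric] del: ennreal_plus)
    finally show ?thesis .
  next
    case False
    hence q1': "q = 1" using q1 by simp
    hence S0t: "S0 = top" using ex by simp
    have "AE x in M. ennreal (W x * \<Psi> x powr (-q)) * indicator U x \<le> ennreal (cU powr (-q) * x1)"
      using low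
    proof (elim AE_mp, intro AE_I2 impI)
      fix x assume x: "x \<in> space M" and l: "x \<in> U \<longrightarrow> cU * W x \<le> \<Psi> x"
      show "ennreal (W x * \<Psi> x powr (-q)) * indicator U x \<le> ennreal (cU powr (-q) * x1)"
      proof (cases "x \<in> U")
        case True
        have "W x * \<Psi> x powr (-q) \<le> cU powr (-q) * x1"
          using wb[OF x] l True Wp[OF x] q1' unfolding x1_def by simp
        then show ?thesis using True by (simp add: ennreal_leI)
      qed simp
    qed
    then show ?thesis unfolding S0t Lnorm_inf by (rule esssup_I[rotated]) measurable
  qed
  have rv: "1 / (V x * \<Psi> x powr (-q)) = (1 / V x) powr (1 - q) * \<Phi>r x powr (q / \<alpha>)" if x: "x \<in> space M" for x
    unfolding \<Psi>def[OF x] by (rule recip_id) (use \<Phi>p[OF x] Vp[OF x] al in auto)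
  have L1: "Lnorm M 1 U (\<lambda>x. ennreal (\<Phi>r x)) = ennreal (A * mU)" unfolding Lnorm_one AU mU_def ..
  have F2: "Lnorm M R0 U (\<lambda>x. ennreal (1 / (V x * \<Psi> x powr (-q)))) \<le> ennreal (x2 * (A * mU) powr (q / \<alpha>))"
  proof (cases "q < 1")
    case True
    define \<rho> where "\<rho> = (if R = top then top else ennreal (enn2real R / (1 - q)))"
    have \<rho>pos: "0 < \<rho>" unfolding \<rho>_def using pos True by (auto simp: enn2real_pos)
    have \<rho>R: "\<rho> * ennreal (1 - q) = R"
    proof (cases "R = top")
      case True thus ?thesis using \<open>q < 1\<close> unfolding \<rho>_def by simp
    next
      case False
      have "ennreal (enn2real R / (1 - q)) * ennreal (1 - q) = ennreal (enn2real R / (1 - q) * (1 - q))"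
        using \<open>q < 1\<close> by (simp add: ennreal_mult[symmetric] del: ennreal_plus)
      also have "\<dots> = R" using \<open>q < 1\<close> False by (simp add: ennreal_enn2real_if)
      finally show ?thesis unfolding \<rho>_def using False by simp
    qed
    have r\<rho>: "rcp \<rho> = (1 - q) * rcp R"
    proof (cases "R = top")
      case True thus ?thesis unfolding \<rho>_def by simp
    next
      case False
      have Rp: "0 < enn2real R" using pos False by (simp add: enn2real_pos)
      then show ?thesis unfolding \<rho>_def using False \<open>q < 1\<close> rcp_fin[OF pos(2) False]
        by (simp add: ennreal_rcp)
    qed
    have p2: "0 < \<alpha> / q" "ennreal (\<alpha> / q) \<noteq> top" "rcp (ennreal (\<alpha> / q)) = q / \<alpha>"
      using al q0 by (auto simp: ennreal_rcp)
    have rr: "rcp R0 = rcp \<rho> + rcp (ennreal (\<alpha> / q))"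
      unfolding r\<rho> p2(3) using ex by simp
    have fR: "Lnorm M \<rho> U (\<lambda>x. epow (ennreal (1 / V x)) (1 - q)) \<le> ennreal (nR powr (1 - q))"
    proof -
      have "Lnorm M \<rho> U (\<lambda>x. epow (ennreal (1 / V x)) (1 - q)) \<le> epow (Lnorm M (\<rho> * ennreal (1 - q)) U (\<lambda>x. ennreal (1 / V x))) (1 - q)"
        using \<rho>pos True by (intro Lnorm_pow_le) auto
      also have "\<dots> = ennreal (nR powr (1 - q))" unfolding \<rho>R nR(1) using nR(2) by (simp add: epow_ennreal)
      finally show ?thesis .
    qed
    have fP: "Lnorm M (ennreal (\<alpha> / q)) U (\<lambda>x. epow (ennreal (\<Phi>r x)) (q / \<alpha>)) \<le> ennreal ((A * mU) powr (q / \<alpha>))"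
    proof -
      have e1: "ennreal (\<alpha> / q) * ennreal (q / \<alpha>) = 1"
        using al q0 by (simp add: ennreal_mult[symmetric] del: ennreal_plus)
      have "Lnorm M (ennreal (\<alpha> / q)) U (\<lambda>x. epow (ennreal (\<Phi>r x)) (q / \<alpha>)) \<le> epow (Lnorm M (ennreal (\<alpha> / q) * ennreal (q / \<alpha>)) U (\<lambda>x. ennreal (\<Phi>r x))) (q / \<alpha>)"
        using al q0 by (intro Lnorm_pow_le) auto
      also have "\<dots> = ennreal ((A * mU) powr (q / \<alpha>))" unfolding e1 L1
        using Apos mpos unfolding mU_def by (simp add: epow_ennreal)
      finally show ?thesis .
    qed
    have "Lnorm M R0 U (\<lambda>x. ennreal (1 / (V x * \<Psi> x powr (-q))))
       \<le> Lnorm M R0 U (\<lambda>x. epow (ennreal (1 / V x)) (1 - q) * epow (ennreal (\<Phi>r x)) (q / \<alpha>))"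
    proof (rule Lnorm_mono_space)
      fix x assume x: "x \<in> space M"
      show "ennreal (1 / (V x * \<Psi> x powr (-q))) \<le> epow (ennreal (1 / V x)) (1 - q) * epow (ennreal (\<Phi>r x)) (q / \<alpha>)"
        unfolding rv[OF x] using Vp[OF x] \<Phi>p[OF x] by (simp add: epow_ennreal ennreal_mult)
    qed (use pos in auto)
    also have "\<dots> \<le> Lnorm M \<rho> U (\<lambda>x. epow (ennreal (1 / V x)) (1 - q)) * Lnorm M (ennreal (\<alpha> / q)) U (\<lambda>x. epow (ennreal (\<Phi>r x)) (q / \<alpha>))"
    proof (rule Lnorm_holder)
      show "Lnorm M \<rho> U (\<lambda>x. epow (ennreal (1 / V x)) (1 - q)) \<noteq> top"
        using fR by (metis ennreal_neq_top neq_top_trans)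
    qed (use pos \<rho>pos p2 rr ex in auto)
    also have "\<dots> \<le> ennreal (nR powr (1 - q)) * ennreal ((A * mU) powr (q / \<alpha>))"
      by (intro mult_mono fR fP) auto
    also have "\<dots> = ennreal (x2 * (A * mU) powr (q / \<alpha>))"
      unfolding x2_def using True by (simp add: ennreal_mult[symmetric] del: ennreal_plus)
    finally show ?thesis .
  next
    case False
    hence q1': "q = 1" using q1 by simp
    have R0a: "R0 * ennreal (1 / \<alpha>) = 1" using ex q1' by simp
    have "Lnorm M R0 U (\<lambda>x. ennreal (1 / (V x * \<Psi> x powr (-q))))
       \<le> Lnorm M R0 U (\<lambda>x. epow (ennreal (\<Phi>r x)) (1 / \<alpha>))"
    proof (rule Lnorm_mono_space)
      fix x assume x: "x \<in> space M"
      show "ennreal (1 / (V x * \<Psi> x powr (-q))) \<le> epow (ennreal (\<Phi>r x)) (1 / \<alpha>)"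
        unfolding rv[OF x] using Vp[OF x] \<Phi>p[OF x] q1' by (simp add: epow_ennreal)
    qed (use pos in auto)
    also have "\<dots> \<le> epow (Lnorm M (R0 * ennreal (1 / \<alpha>)) U (\<lambda>x. ennreal (\<Phi>r x))) (1 / \<alpha>)"
      using pos al by (intro Lnorm_pow_le) auto
    also have "\<dots> = ennreal (x2 * (A * mU) powr (q / \<alpha>))"
      unfolding R0a L1 x2_def using Apos mpos q1' unfolding mU_def by (simp add: epow_ennreal)
    finally show ?thesis .
  qed
  have "ennreal (mU powr (-(rcp S0 + rcp R0))) * Lnorm M S0 U (\<lambda>x. ennreal (W x * \<Psi> x powr (-q)))
     * Lnorm M R0 U (\<lambda>x. ennreal (1 / (V x * \<Psi> x powr (-q))))
     \<le> ennreal (mU powr (-(1/\<alpha>))) * ennreal (cU powr (-q) * x1) * ennreal (x2 * (A * mU) powr (q / \<alpha>))"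
    using ex by (intro mult_mono F1 F2) auto
  also have "\<dots> = ennreal (mU powr (-(1/\<alpha>)) * cU powr (-q) * (A * mU) powr (q / \<alpha>) * (x1 * x2))"
    unfolding x1_def x2_def using nS(2) nR(2) by (simp add: ennreal_mult[symmetric] mult_ac del: ennreal_plus)
  also have "mU powr (-(1/\<alpha>)) * cU powr (-q) * (A * mU) powr (q / \<alpha>) = L powr (q/\<alpha>) * (mU powr (-(1/\<alpha>))) powr (1 - q)"
    unfolding cU_def by (rule real_id) (use mpos Apos Lpos al in \<open>auto simp: mU_def\<close>)
  also have "L powr (q/\<alpha>) * (mU powr (-(1/\<alpha>))) powr (1 - q) * (x1 * x2)
     = L powr (q/\<alpha>) * (if q < 1 then (mU powr (-(1/\<alpha>)) * nS * nR) powr (1-q) else 1)"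
  proof (cases "q < 1")
    case True thus ?thesis unfolding x1_def x2_def using nS(2) nR(2) by (simp add: powr_mult)
  next
    case False thus ?thesis unfolding x1_def x2_def using q1 mpos unfolding mU_def by simp
  qed
  finally show ?thesis unfolding mU_def .
qed



lemma weightD: "weight M w \<Longrightarrow> w \<in> borel_measurable M"  "weight M w \<Longrightarrow> x \<in> space M \<Longrightarrow> 0 < w x"
  by (auto simp: weight_def)

lemma core:
  assumes B: "basis_of_sets M \<U>"
    and pos: "0 < S" "0 < R" "0 < S0" "0 < R0" and e: "0 < e"
    and r1: "rcp S - rcp S0 = e" and r2: "rcp R0 - rcp R = e"
    and wW: "weight M W" and wV: "weight M V"
    and K: "wv_const M \<U> S R W V < top"
    and mb: "maxop_bounded M \<U> (ennreal (enn2real S / alpha_exp S0 R0)) a b"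
    and ae: "\<And>x. x \<in> space M \<Longrightarrow> a x = V x powr alpha_exp S0 R0"
    and be: "\<And>x. x \<in> space M \<Longrightarrow> b x = W x powr alpha_exp S0 R0"
    and G0m[measurable]: "G0 \<in> borel_measurable M" and G0p: "\<And>x. x \<in> space M \<Longrightarrow> 0 < G0 x"
    and G0fin: "(\<integral>\<^sup>+x. ennreal (G0 x powr enn2real S) \<partial>M) \<noteq> top"
  obtains \<Psi> where "\<Psi> \<in> borel_measurable M" "\<And>x. x \<in> space M \<Longrightarrow> G0 x \<le> \<Psi> x"
    "(\<integral>\<^sup>+x. ennreal (\<Psi> x powr enn2real S) \<partial>M) \<noteq> top"
    "wv_const M \<U> S0 R0 (\<lambda>x. W x * \<Psi> x powr (-(enn2real S * e))) (\<lambda>x. V x * \<Psi> x powr (-(enn2real S * e))) < top"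
proof -
  note ex = exps[OF pos e r1 r2]
  define \<alpha> where "\<alpha> = alpha_exp S0 R0"
  define Sr where "Sr = enn2real S"
  define q where "q = Sr * e"
  define t where "t = Sr / \<alpha>"
  have al: "0 < \<alpha>" and Sr: "0 < Sr" using ex unfolding \<alpha>_def Sr_def by auto
  have t: "0 < t" unfolding t_def using al Sr by simp
  have at: "\<alpha> * t = Sr" unfolding t_def using al by simp
  have [measurable]: "W \<in> borel_measurable M" "V \<in> borel_measurable M" using wW wV by (auto dest: weightD)
  have Wp: "\<And>x. x \<in> space M \<Longrightarrow> 0 < W x" and Vp: "\<And>x. x \<in> space M \<Longrightarrow> 0 < V x"
    using wW wV by (auto dest: weightD)
  have am[measurable]: "a \<in> borel_measurable M"
    using measurable_cong[of M a "\<lambda>x. V x powr \<alpha>"] ae unfolding \<alpha>_def by simp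
  have bm[measurable]: "b \<in> borel_measurable M"
    using measurable_cong[of M b "\<lambda>x. W x powr \<alpha>"] be unfolding \<alpha>_def by simp
  have ap: "0 < a x" if x: "x \<in> space M" for x
  proof -
    have "V x \<noteq> 0" using Vp[OF x] by simp
    thus ?thesis using ae[OF x] by simp
  qed
  have bp: "0 < b x" if x: "x \<in> space M" for x
  proof -
    have "W x \<noteq> 0" using Wp[OF x] by simp
    thus ?thesis using be[OF x] by simp
  qed
  have mb': "maxop_bounded M \<U> (ennreal t) a b" using mb unfolding t_def Sr_def \<alpha>_def .
  obtain C where C: "C > 0" and Cb: "\<And>\<phi>. \<phi> \<in> borel_measurable M \<Longrightarrow>
      (\<integral>\<^sup>+x. epow (\<phi> x * ennreal (a x)) t \<partial>M) \<noteq> top \<Longrightarrow>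
      (\<integral>\<^sup>+x. epow (mx M \<U> \<phi> x * ennreal (b x)) t \<partial>M) \<le> ennreal C * (\<integral>\<^sup>+x. epow (\<phi> x * ennreal (a x)) t \<partial>M)"
    by (rule mx_bound[OF B t mb' am ap]) (assumption | rule that)+
  define g where "g = (\<lambda>x. ennreal (G0 x powr \<alpha> / V x powr \<alpha>))"
  have gm[measurable]: "g \<in> borel_measurable M" unfolding g_def by measurable
  have ga: "epow (g x * ennreal (a x)) t = ennreal (G0 x powr Sr)" if x: "x \<in> space M" for x
  proof -
    have "g x * ennreal (a x) = ennreal (G0 x powr \<alpha>)"
      unfolding g_def ae[OF x] \<alpha>_def[symmetric] using Vp[OF x] G0p[OF x]
      by (simp add: ennreal_mult[symmetric] del: ennreal_plus)
    then show ?thesis using G0p[OF x] by (simp add: epow_ennreal powr_powr at)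
  qed
  have gfin: "(\<integral>\<^sup>+x. epow (g x * ennreal (a x)) t \<partial>M) \<noteq> top"
  proof -
    have "(\<integral>\<^sup>+x. epow (g x * ennreal (a x)) t \<partial>M) = (\<integral>\<^sup>+x. ennreal (G0 x powr enn2real S) \<partial>M)"
      by (rule nn_integral_cong) (simp add: ga Sr_def)
    then show ?thesis using G0fin by simp
  qed
  obtain \<Phi> L where \<Phi>m[measurable]: "\<Phi> \<in> borel_measurable M" and g\<Phi>: "\<And>x. x \<in> space M \<Longrightarrow> g x \<le> \<Phi> x"
    and \<Phi>fin: "(\<integral>\<^sup>+x. epow (\<Phi> x * ennreal (a x)) t \<partial>M) \<noteq> top" and Lpos: "L > 0"
    and low: "\<And>U x. U \<in> \<U> \<Longrightarrow> x \<in> U \<Longrightarrow>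
       ennreal (1 / measure M U) * (\<integral>\<^sup>+y. \<Phi> y * indicator U y \<partial>M) * ennreal (b x / a x) \<le> ennreal L * \<Phi> x"
    by (rule rdf[OF B t am bm ap bp C Cb gm gfin]) (assumption | rule that)+
  have gpos: "0 < g x" if x: "x \<in> space M" for x
    unfolding g_def using G0p[OF x] Vp[OF x] by simp
  have gfin': "g x \<noteq> top" for x unfolding g_def by simp
  have "AE x in M. epow (\<Phi> x * ennreal (a x)) t \<noteq> top"
    using nn_integral_PInf_AE[of "\<lambda>x. epow (\<Phi> x * ennreal (a x)) t" M] \<Phi>fin by simp
  hence AE\<Phi>: "AE x in M. \<Phi> x \<noteq> top"
  proof (elim AE_mp, intro AE_I2 impI)
    fix x assume x: "x \<in> space M" and h: "epow (\<Phi> x * ennreal (a x)) t \<noteq> top"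
    show "\<Phi> x \<noteq> top"
    proof
      assume "\<Phi> x = top"
      then have "\<Phi> x * ennreal (a x) = top" using ap[OF x] by simp
      then show False using h by simp
    qed
  qed
  define \<Phi>r where "\<Phi>r = (\<lambda>x. if \<Phi> x = top then enn2real (g x) else enn2real (\<Phi> x))"
  have \<Phi>rm[measurable]: "\<Phi>r \<in> borel_measurable M" unfolding \<Phi>r_def by measurable
  have \<Phi>rg: "enn2real (g x) \<le> \<Phi>r x" if x: "x \<in> space M" for x
    unfolding \<Phi>r_def using g\<Phi>[OF x] by (auto intro: enn2real_mono simp: top.not_eq_extremum)
  have gr: "enn2real (g x) = G0 x powr \<alpha> / V x powr \<alpha>" if x: "x \<in> space M" for x
    unfolding g_def using G0p[OF x] Vp[OF x] by simp
  have \<Phi>rp: "0 < \<Phi>r x" if x: "x \<in> space M" for x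
    using \<Phi>rg[OF x] gr[OF x] G0p[OF x] Vp[OF x] by (smt (verit) divide_pos_pos powr_gt_zero)
  have AE\<Phi>r: "AE x in M. ennreal (\<Phi>r x) = \<Phi> x"
    using AE\<Phi> by (elim eventually_mono) (simp add: \<Phi>r_def ennreal_enn2real_if)
  define \<Psi> where "\<Psi> = (\<lambda>x. \<Phi>r x powr (1 / \<alpha>) * V x)"
  have \<Psi>m[measurable]: "\<Psi> \<in> borel_measurable M" unfolding \<Psi>_def by measurable
  have G0\<Psi>: "G0 x \<le> \<Psi> x" if x: "x \<in> space M" for x
  proof -
    have "(G0 x powr \<alpha> / V x powr \<alpha>) powr (1 / \<alpha>) \<le> \<Phi>r x powr (1 / \<alpha>)"
      using \<Phi>rg[OF x] gr[OF x] al by (intro powr_mono2) auto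
    moreover have "(G0 x powr \<alpha> / V x powr \<alpha>) powr (1 / \<alpha>) = G0 x / V x"
      using G0p[OF x] Vp[OF x] al by (simp add: powr_divide powr_powr)
    ultimately have "G0 x / V x \<le> \<Phi>r x powr (1 / \<alpha>)" by simp
    then show ?thesis unfolding \<Psi>_def using Vp[OF x] by (simp add: divide_le_eq)
  qed
  have \<Psi>fin: "(\<integral>\<^sup>+x. ennreal (\<Psi> x powr enn2real S) \<partial>M) \<noteq> top"
  proof -
    have "(\<integral>\<^sup>+x. ennreal (\<Psi> x powr enn2real S) \<partial>M) = (\<integral>\<^sup>+x. epow (\<Phi> x * ennreal (a x)) t \<partial>M)"
    proof (rule nn_integral_cong_AE)
      show "AE x in M. ennreal (\<Psi> x powr enn2real S) = epow (\<Phi> x * ennreal (a x)) t"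
        using AE\<Phi>r
      proof (elim AE_mp, intro AE_I2 impI)
        fix x assume x: "x \<in> space M" and h: "ennreal (\<Phi>r x) = \<Phi> x"
        have "\<Phi> x * ennreal (a x) = ennreal (\<Phi>r x * V x powr \<alpha>)"
          unfolding h[symmetric] ae[OF x] \<alpha>_def[symmetric] using \<Phi>rp[OF x]
          by (simp add: ennreal_mult[symmetric] del: ennreal_plus)
        moreover have "(\<Phi>r x * V x powr \<alpha>) powr t = \<Psi> x powr enn2real S"
          unfolding \<Psi>_def Sr_def[symmetric] using \<Phi>rp[OF x] Vp[OF x] al
          by (simp add: powr_mult powr_powr t_def mult.commute)
        ultimately show "ennreal (\<Psi> x powr enn2real S) = epow (\<Phi> x * ennreal (a x)) t"
          using \<Phi>rp[OF x] Vp[OF x] by (simp add: epow_ennreal)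
      qed
    qed
    then show ?thesis using \<Phi>fin by simp
  qed
  define Kr where "Kr = enn2real (wv_const M \<U> S R W V)"
  have Kr: "wv_const M \<U> S R W V = ennreal Kr" "0 \<le> Kr"
    unfolding Kr_def using K by (auto simp: ennreal_enn2real_if)
  have sa: "rcp S + rcp R = 1 / \<alpha>" "rcp S0 + rcp R0 = 1 / \<alpha>" using ex unfolding \<alpha>_def by auto
  define Bnd where "Bnd = L powr (q/\<alpha>) * (if q < 1 then Kr powr (1-q) else 1)"
  have q1: "q \<le> 1" using ex unfolding q_def Sr_def by simp
  have wvb: "wv_const M \<U> S0 R0 (\<lambda>x. W x * \<Psi> x powr (-(enn2real S * e))) (\<lambda>x. V x * \<Psi> x powr (-(enn2real S * e))) \<le> ennreal Bnd"
    unfolding wv_const_def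
  proof (rule SUP_least)
    fix U assume U: "U \<in> \<U>"
    have Um[measurable]: "U \<in> sets M" using B U by (rule basis_sets)
    have Us: "U \<subseteq> space M" using B U by (rule basis_subset_space)
    have mpos: "0 < measure M U" using B U by (rule basis_measure_pos)
    have em: "0 < emeasure M U" using basis_emeasure[OF B U] by simp
    define LS where "LS = Lnorm M S U (\<lambda>x. ennreal (W x))"
    define LR where "LR = Lnorm M R U (\<lambda>x. ennreal (1 / V x))"
    define m' where "m' = measure M U powr (-(1/\<alpha>))"
    have m'p: "0 < m'" unfolding m'_def using mpos by simp
    have KU: "ennreal m' * LS * LR \<le> ennreal Kr"
      unfolding Kr(1)[symmetric] wv_const_def m'_def LS_def LR_def sa(1)[symmetric]
      by (rule SUP_upper[OF U])
    have LSp: "0 < LS" unfolding LS_def using pos em Us Wp by (intro Lnorm_pos) auto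
    have LRp: "0 < LR" unfolding LR_def using pos em Us Vp by (intro Lnorm_pos) auto
    have LSf: "LS \<noteq> top"
    proof
      assume "LS = top"
      hence "ennreal m' * LS * LR = top" using m'p LRp by (simp add: ennreal_mult_eq_top_iff)
      thus False using KU by (simp add: top_unique)
    qed
    have LRf: "LR \<noteq> top"
    proof
      assume "LR = top"
      hence "ennreal m' * LS * LR = top" using m'p LSp by (simp add: ennreal_mult_eq_top_iff)
      thus False using KU by (simp add: top_unique)
    qed
    define nS where "nS = enn2real LS"
    define nR where "nR = enn2real LR"
    have nS: "LS = ennreal nS" "0 \<le> nS" unfolding nS_def using LSf by (auto simp: ennreal_enn2real_if)
    have nR: "LR = ennreal nR" "0 \<le> nR" unfolding nR_def using LRf by (auto simp: ennreal_enn2real_if)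
    have mnn: "m' * nS * nR \<le> Kr"
    proof -
      have "ennreal (m' * nS * nR) \<le> ennreal Kr"
        using KU unfolding nS(1) nR(1) using m'p nS(2) nR(2) by (simp add: ennreal_mult[symmetric] del: ennreal_plus)
      thus ?thesis using Kr(2) by (simp add: ennreal_le_iff)
    qed
    define AU where "AU = (\<integral>\<^sup>+y. \<Phi> y * indicator U y \<partial>M)"
    have AUp: "0 < AU"
    proof -
      have "0 < Lnorm M 1 U \<Phi>"
        using em Us g\<Phi> gpos by (intro Lnorm_pos) (auto intro: less_le_trans)
      thus ?thesis unfolding AU_def Lnorm_one .
    qed
    have AUf: "AU \<noteq> top"
    proof
      assume AUt: "AU = top"
      have allt: "\<Phi> x = top" if x: "x \<in> U" for x
      proof -
        have xs: "x \<in> space M" using x Us by auto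
        have "ennreal (1 / measure M U) * AU * ennreal (b x / a x) = top"
          unfolding AUt using mpos ap[OF xs] bp[OF xs] by (simp add: ennreal_mult_eq_top_iff)
        hence "ennreal L * \<Phi> x = top" using low[OF U x] unfolding AU_def by (simp add: top_unique)
        thus ?thesis by (simp add: ennreal_mult_eq_top_iff)
      qed
      have AEU: "AE x in M. x \<notin> U" using AE\<Phi> by (elim eventually_mono) (use allt in auto)
      have seteq: "{x\<in>space M. \<not> (x \<notin> U)} = U" using Us by auto
      have "emeasure M U = 0" using AE_iff_measurable[OF Um seteq] AEU by simp
      thus False using em by simp
    qed
    define A where "A = enn2real AU / measure M U"
    have Apos: "0 < A" unfolding A_def using AUp AUf mpos by (simp add: enn2real_positive_iff top.not_eq_extremum)
    have AUe: "AU = ennreal (A * measure M U)"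
      unfolding A_def using mpos AUf by (simp add: ennreal_enn2real_if)
    have AUr: "(\<integral>\<^sup>+x. ennreal (\<Phi>r x) * indicator U x \<partial>M) = ennreal (A * measure M U)"
      unfolding AUe[symmetric] AU_def
      by (rule nn_integral_cong_AE) (use AE\<Phi>r in \<open>auto elim: eventually_mono\<close>)
    define cU where "cU = (A / L) powr (1/\<alpha>)"
    have lowU: "AE x in M. x \<in> U \<longrightarrow> cU * W x \<le> \<Psi> x"
      using AE\<Phi>r
    proof (elim AE_mp, intro AE_I2 impI)
      fix x assume x: "x \<in> space M" and h: "ennreal (\<Phi>r x) = \<Phi> x" and xU: "x \<in> U"
      have "ennreal (1 / measure M U) * ennreal (A * measure M U) * ennreal (b x / a x) \<le> ennreal L * ennreal (\<Phi>r x)"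
        using low[OF U xU] unfolding h AU_def[symmetric] AUe .
      hence "ennreal (A * (b x / a x)) \<le> ennreal (L * \<Phi>r x)"
        using mpos Apos ap[OF x] bp[OF x] Lpos \<Phi>rp[OF x]
        by (simp add: ennreal_mult[symmetric] del: ennreal_plus)
      hence le1: "A * (b x / a x) \<le> L * \<Phi>r x"
        using Lpos \<Phi>rp[OF x] by (simp add: ennreal_le_iff)
      have ba: "b x / a x = (W x / V x) powr \<alpha>"
        unfolding ae[OF x] be[OF x] \<alpha>_def[symmetric] by (simp add: powr_divide)
      have "(A / L) * (W x / V x) powr \<alpha> \<le> \<Phi>r x"
        using le1 Lpos unfolding ba by (simp add: field_simps)
      hence "((A / L) * (W x / V x) powr \<alpha>) powr (1/\<alpha>) \<le> \<Phi>r x powr (1/\<alpha>)"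
        using al Apos Lpos by (intro powr_mono2) auto
      moreover have "((A / L) * (W x / V x) powr \<alpha>) powr (1/\<alpha>) = cU * (W x / V x)"
      proof -
        have "((A / L) * (W x / V x) powr \<alpha>) powr (1/\<alpha>) = (A / L) powr (1/\<alpha>) * ((W x / V x) powr \<alpha>) powr (1/\<alpha>)"
          by (rule powr_mult)
        also have "((W x / V x) powr \<alpha>) powr (1/\<alpha>) = (W x / V x) powr (\<alpha> * (1/\<alpha>))" by (rule powr_powr)
        also have "\<alpha> * (1/\<alpha>) = 1" using al by simp
        also have "(W x / V x) powr 1 = W x / V x" using Wp[OF x] Vp[OF x] by simp
        finally show ?thesis unfolding cU_def .
      qed
      ultimately have "cU * (W x / V x) \<le> \<Phi>r x powr (1/\<alpha>)" by simp
      then show "cU * W x \<le> \<Psi> x" unfolding \<Psi>_def using Vp[OF x]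
        by (simp add: field_simps)
    qed
    have "ennreal (measure M U powr (-(rcp S0 + rcp R0))) * Lnorm M S0 U (\<lambda>x. ennreal (W x * \<Psi> x powr (-q)))
       * Lnorm M R0 U (\<lambda>x. ennreal (1 / (V x * \<Psi> x powr (-q))))
       \<le> ennreal (L powr (q/\<alpha>) * (if q < 1 then (measure M U powr (-(1/\<alpha>)) * nS * nR) powr (1-q) else 1))"
    proof (rule perU[OF pos e r1 r2 _ _ Um mpos])
      show "q = enn2real S * e" unfolding q_def Sr_def ..
      show "\<alpha> = alpha_exp S0 R0" unfolding \<alpha>_def ..
    qed (use Wp Vp \<Phi>rp Apos Lpos lowU AUr nS nR in \<open>auto simp: \<Psi>_def cU_def LS_def LR_def\<close>)
    also have "\<dots> \<le> ennreal Bnd"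
    proof (intro ennreal_leI)
      show "L powr (q/\<alpha>) * (if q < 1 then (measure M U powr (-(1/\<alpha>)) * nS * nR) powr (1-q) else 1) \<le> Bnd"
      proof (cases "q < 1")
        case True
        have "(m' * nS * nR) powr (1-q) \<le> Kr powr (1-q)"
          using mnn m'p nS(2) nR(2) True by (intro powr_mono2) auto
        then show ?thesis unfolding Bnd_def m'_def using True by (simp add: mult_left_mono)
      qed (simp add: Bnd_def)
    qed
    finally show "ennreal (measure M U powr (-(rcp S0 + rcp R0))) * Lnorm M S0 U (\<lambda>x. ennreal (W x * \<Psi> x powr (-(enn2real S * e))))
       * Lnorm M R0 U (\<lambda>x. ennreal (1 / (V x * \<Psi> x powr (-(enn2real S * e))))) \<le> ennreal Bnd"
      unfolding q_def Sr_def .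
  qed
  show ?thesis
  proof (rule that[OF \<Psi>m G0\<Psi> \<Psi>fin])
    show "wv_const M \<U> S0 R0 (\<lambda>x. W x * \<Psi> x powr (-(enn2real S * e))) (\<lambda>x. V x * \<Psi> x powr (-(enn2real S * e))) < top"
      using wvb by (simp add: top.not_eq_extremum le_less_trans[OF _ ennreal_less_top])
  qed
qed


lemma Lnorm_cong_space:
  assumes "g \<in> borel_measurable M" "g' \<in> borel_measurable M" "A \<in> sets M" "0 < p"
    and "\<And>x. x \<in> space M \<Longrightarrow> g x = g' x"
  shows "Lnorm M p A g = Lnorm M p A g'"
  using assms by (intro antisym Lnorm_mono_space) auto

lemma wv_const_cong:
  assumes B: "basis_of_sets M \<U>" and "0 < s" "0 < r"
    and [measurable]: "w \<in> borel_measurable M" "w' \<in> borel_measurable M" "v \<in> borel_measurable M" "v' \<in> borel_measurable M"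
    and eq: "\<And>x. x \<in> space M \<Longrightarrow> w x = w' x" "\<And>x. x \<in> space M \<Longrightarrow> v x = v' x"
  shows "wv_const M \<U> s r w v = wv_const M \<U> s r w' v'"
  unfolding wv_const_def
proof (rule SUP_cong[OF refl])
  fix U assume U: "U \<in> \<U>"
  have [measurable]: "U \<in> sets M" using B U by (rule basis_sets)
  have "Lnorm M s U (\<lambda>x. ennreal (w x)) = Lnorm M s U (\<lambda>x. ennreal (w' x))"
    using assms by (intro Lnorm_cong_space) auto
  moreover have "Lnorm M r U (\<lambda>x. ennreal (1 / v x)) = Lnorm M r U (\<lambda>x. ennreal (1 / v' x))"
    using assms by (intro Lnorm_cong_space) auto
  ultimately show "ennreal (measure M U powr - (rcp s + rcp r)) * Lnorm M s U (\<lambda>x. ennreal (w x)) * Lnorm M r U (\<lambda>x. ennreal (1 / v x))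
    = ennreal (measure M U powr - (rcp s + rcp r)) * Lnorm M s U (\<lambda>x. ennreal (w' x)) * Lnorm M r U (\<lambda>x. ennreal (1 / v' x))"
    by simp
qed

lemma wv_const_swap:
  assumes B: "basis_of_sets M \<U>" and "0 < s" "0 < r"
    and [measurable]: "w \<in> borel_measurable M" "v \<in> borel_measurable M"
    and wp: "\<And>x. x \<in> space M \<Longrightarrow> 0 < w x"
  shows "wv_const M \<U> s r w v = wv_const M \<U> r s (\<lambda>x. 1 / v x) (\<lambda>x. 1 / w x)"
  unfolding wv_const_def
proof (rule SUP_cong[OF refl])
  fix U assume U: "U \<in> \<U>"
  have [measurable]: "U \<in> sets M" using B U by (rule basis_sets)
  have "Lnorm M s U (\<lambda>x. ennreal (1 / (1 / w x))) = Lnorm M s U (\<lambda>x. ennreal (w x))"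
    using assms by (intro Lnorm_cong_space) auto
  then show "ennreal (measure M U powr - (rcp s + rcp r)) * Lnorm M s U (\<lambda>x. ennreal (w x)) * Lnorm M r U (\<lambda>x. ennreal (1 / v x))
    = ennreal (measure M U powr - (rcp r + rcp s)) * Lnorm M r U (\<lambda>x. ennreal (1 / v x)) * Lnorm M s U (\<lambda>x. ennreal (1 / (1 / w x)))"
    by (simp add: ac_simps)
qed

lemma young_sum:
  fixes x y \<theta> :: real
  assumes "0 < \<theta>" "\<theta> < 1" "0 \<le> x" "0 \<le> y"
  shows "x powr \<theta> * y powr (1 - \<theta>) \<le> x + y"
proof (cases "x = 0 \<or> y = 0")
  case True thus ?thesis using assms by auto
next
  case False
  hence "x powr \<theta> * y powr (1 - \<theta>) \<le> \<theta> * x + (1 - \<theta>) * y"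
    using assms by (intro Youngs_inequality_0) auto
  also have "\<dots> \<le> x + y" using assms by (intro add_mono) (auto simp: mult_left_le_one_le)
  finally show ?thesis .
qed

lemma wnorm_fin:
  assumes "p \<noteq> top" "0 < p"
  shows "wnorm M p w f = epow (\<integral>\<^sup>+x. epow (ennreal (\<bar>f x\<bar> * w x)) (enn2real p) \<partial>M) (1 / enn2real p)"
  unfolding wnorm_def using assms by (simp add: Lnorm_fin nn_integral_space_ind)

lemma wnorm_fin_iff:
  assumes "p \<noteq> top" "0 < p"
  shows "wnorm M p w f < top \<longleftrightarrow> (\<integral>\<^sup>+x. epow (ennreal (\<bar>f x\<bar> * w x)) (enn2real p) \<partial>M) < top"
  unfolding wnorm_fin[OF assms] by simp



lemma h0_exists:
  assumes "sigma_finite_measure M"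
  obtains h0 :: "'a \<Rightarrow> real" where "h0 \<in> borel_measurable M" "\<And>x. 0 < h0 x"
    "(\<integral>\<^sup>+x. ennreal (h0 x) \<partial>M) \<noteq> top"
proof (rule sigma_finite_measure.obtain_positive_integrable_function[OF assms])
  fix h :: "'a \<Rightarrow> real"
  assume h: "h \<in> borel_measurable M" "\<And>x. 0 < h x" "\<And>x. h x \<le> 1" "integrable M h"
  show thesis using that[of h] h by (auto dest: integrableD)
qed

lemma case_pos:
  assumes sf: "sigma_finite_measure M" and B: "basis_of_sets M \<U>"
    and pos: "0 < p0" "0 < s0" "0 < r0" "0 < p" "0 < s" "0 < r"
    and r1: "rcp p - rcp p0 = gi" and r2: "rcp s - rcp s0 = gi" and r3: "rcp r0 - rcp r = gi"
    and gi: "gi > 0"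
    and wW: "weight M w" and wV: "weight M v"
    and K: "wv_const M \<U> s r w v < top"
    and mb: "maxop_bounded M \<U> (t_exp gi s0 r0 s r) (vt_weight gi s0 r0 w v) (wt_weight gi s0 r0 w v)"
    and f: "f \<in> Lpw M p v"
  shows "\<exists>w0 v0. (w0, v0) \<in> W_class M \<U> gi s0 r0 w v \<and> f \<in> Lpw M p0 v0"
proof -
  note ex = exps[OF pos(5) pos(6) pos(2) pos(3) gi r2 r3]
  define Sr where "Sr = enn2real s"
  define \<alpha> where "\<alpha> = alpha_exp s0 r0"
  have Sr: "0 < Sr" and al: "0 < \<alpha>" using ex unfolding Sr_def \<alpha>_def by auto
  have [measurable]: "w \<in> borel_measurable M" "v \<in> borel_measurable M" using wW wV by (auto dest: weightD)
  have wp: "\<And>x. x \<in> space M \<Longrightarrow> 0 < w x" and vp: "\<And>x. x \<in> space M \<Longrightarrow> 0 < v x"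
    using wW wV by (auto dest: weightD)
  have pf: "p \<noteq> top" using r1 gi rcp_nonneg[of p0] by (intro rcp_pos_fin) linarith
  define P where "P = enn2real p"
  have P: "0 < P" unfolding P_def using pf pos by (simp add: enn2real_pos)
  have rp: "rcp p = 1 / P" unfolding P_def using rcp_fin[OF pos(4) pf] .
  have fm[measurable]: "f \<in> borel_measurable M" using f by (simp add: Lpw_def)
  define F where "F = (\<lambda>x. \<bar>f x\<bar> * v x)"
  have Fm[measurable]: "F \<in> borel_measurable M" unfolding F_def by measurable
  have Fnn: "0 \<le> F x" if "x \<in> space M" for x unfolding F_def using vp[OF that] by simp
  have IF: "(\<integral>\<^sup>+x. ennreal (F x powr P) \<partial>M) < top"
  proof -
    have "wnorm M p v f < top" using f by (simp add: Lpw_def)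
    hence "(\<integral>\<^sup>+x. epow (ennreal (\<bar>f x\<bar> * v x)) (enn2real p) \<partial>M) < top"
      unfolding wnorm_fin_iff[OF pf pos(4)] .
    moreover have "(\<integral>\<^sup>+x. epow (ennreal (\<bar>f x\<bar> * v x)) (enn2real p) \<partial>M) = (\<integral>\<^sup>+x. ennreal (F x powr P) \<partial>M)"
      by (rule nn_integral_cong) (use Fnn in \<open>simp add: epow_ennreal F_def P_def\<close>)
    ultimately show ?thesis by simp
  qed
  obtain h0 where [measurable]: "h0 \<in> borel_measurable M" and h0p: "\<And>x. 0 < h0 x"
    and h0i: "(\<integral>\<^sup>+x. ennreal (h0 x) \<partial>M) \<noteq> top"
    using h0_exists[OF sf] by metis
  define G0 where "G0 = (\<lambda>x. (F x powr P + h0 x) powr (1 / Sr))"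
  have G0m[measurable]: "G0 \<in> borel_measurable M" unfolding G0_def by measurable
  have FPh: "0 < F x powr P + h0 x" for x using add_nonneg_pos[OF powr_ge_zero h0p] .
  have G0p: "0 < G0 x" if "x \<in> space M" for x
    unfolding G0_def using FPh[of x] by simp
  have G0S: "G0 x powr Sr = F x powr P + h0 x" if "x \<in> space M" for x
    unfolding G0_def using FPh[of x] Sr by (simp add: powr_powr)
  have G0fin: "(\<integral>\<^sup>+x. ennreal (G0 x powr enn2real s) \<partial>M) \<noteq> top"
  proof -
    have "(\<integral>\<^sup>+x. ennreal (G0 x powr enn2real s) \<partial>M) = (\<integral>\<^sup>+x. ennreal (F x powr P) + ennreal (h0 x) \<partial>M)"
      by (rule nn_integral_cong) (use G0S h0p in \<open>simp add: Sr_def[symmetric] less_imp_le\<close>)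
    also have "\<dots> = (\<integral>\<^sup>+x. ennreal (F x powr P) \<partial>M) + (\<integral>\<^sup>+x. ennreal (h0 x) \<partial>M)"
      by (rule nn_integral_add) auto
    finally show ?thesis using IF h0i by (simp add: top.not_eq_extremum)
  qed
  have te: "t_exp gi s0 r0 s r = ennreal (enn2real s / alpha_exp s0 r0)"
  proof -
    have sE: "ennreal Sr = s" unfolding Sr_def using ex by (simp add: ennreal_enn2real_if)
    have "t_exp gi s0 r0 s r = s / ennreal \<alpha>" using gi by (simp add: t_exp_def \<alpha>_def)
    also have "\<dots> = ennreal Sr / ennreal \<alpha>" unfolding sE ..
    also have "\<dots> = ennreal (Sr / \<alpha>)" by (rule divide_ennreal) (use Sr al in auto)
    finally show ?thesis unfolding Sr_def \<alpha>_def .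
  qed
  have mb': "maxop_bounded M \<U> (ennreal (enn2real s / alpha_exp s0 r0)) (vt_weight gi s0 r0 w v) (wt_weight gi s0 r0 w v)"
    using mb unfolding te .
  have ae: "\<And>x. x \<in> space M \<Longrightarrow> vt_weight gi s0 r0 w v x = v x powr alpha_exp s0 r0"
    and be: "\<And>x. x \<in> space M \<Longrightarrow> wt_weight gi s0 r0 w v x = w x powr alpha_exp s0 r0"
    using gi by (simp_all add: vt_weight_def wt_weight_def)
  obtain \<Psi> where \<Psi>m[measurable]: "\<Psi> \<in> borel_measurable M" and G0\<Psi>: "\<And>x. x \<in> space M \<Longrightarrow> G0 x \<le> \<Psi> x"
    and wvc: "wv_const M \<U> s0 r0 (\<lambda>x. w x * \<Psi> x powr (-(enn2real s * gi))) (\<lambda>x. v x * \<Psi> x powr (-(enn2real s * gi))) < top"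
    by (rule core[OF B pos(5) pos(6) pos(2) pos(3) gi r2 r3 wW wV K mb' ae be G0m G0p G0fin]) (assumption | rule that)+
  define q where "q = Sr * gi"
  have \<Psi>p: "0 < \<Psi> x" if "x \<in> space M" for x using G0p[OF that] G0\<Psi>[OF that] by simp
  define w0 where "w0 = (\<lambda>x. w x * \<Psi> x powr (-q))"
  define v0 where "v0 = (\<lambda>x. v x * \<Psi> x powr (-q))"
  have Wc: "(w0, v0) \<in> W_class M \<U> gi s0 r0 w v"
  proof -
    have "weight M w0" unfolding weight_def w0_def
    proof (intro conjI ballI)
      fix x assume x: "x \<in> space M"
      have "0 < \<Psi> x powr (-q)" using \<Psi>p[OF x] by simp
      thus "0 < w x * \<Psi> x powr (-q)" using wp[OF x] by simp
    qed measurable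
    moreover have "weight M v0" unfolding weight_def v0_def
    proof (intro conjI ballI)
      fix x assume x: "x \<in> space M"
      have "0 < \<Psi> x powr (-q)" using \<Psi>p[OF x] by simp
      thus "0 < v x * \<Psi> x powr (-q)" using vp[OF x] by simp
    qed measurable
    moreover have "\<forall>x\<in>space M. w0 x / v0 x = w x / v x"
    proof
      fix x assume x: "x \<in> space M"
      have "\<Psi> x powr (-q) \<noteq> 0" using \<Psi>p[OF x] by simp
      thus "w0 x / v0 x = w x / v x" unfolding w0_def v0_def by simp
    qed
    moreover have "wv_const M \<U> s0 r0 w0 v0 < top" unfolding w0_def v0_def q_def Sr_def using wvc .
    ultimately show ?thesis unfolding W_class_def using gi by simp
  qed
  have kap: "1 - P * gi = P * rcp p0" using rp r1 P by (simp add: field_simps)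
  have key: "F x * \<Psi> x powr (-q) \<le> F x powr (P * rcp p0)" if x: "x \<in> space M" for x
  proof (cases "F x = 0")
    case True thus ?thesis by simp
  next
    case False
    hence Fp: "0 < F x" using Fnn[OF x] by simp
    have "(F x powr P) powr (1 / Sr) \<le> G0 x"
      unfolding G0_def using h0p[of x] Sr by (intro powr_mono2) auto
    moreover have "(F x powr P) powr (1 / Sr) = F x powr (P / Sr)" by (simp add: powr_powr)
    ultimately have b2: "F x powr (P / Sr) \<le> \<Psi> x" using G0\<Psi>[OF x] by simp
    have "\<Psi> x powr (-q) \<le> (F x powr (P / Sr)) powr (-q)"
      using b2 Fp gi Sr unfolding q_def by (intro powr_mono2') auto
    also have "\<dots> = F x powr (- (P * gi))" using Sr unfolding q_def by (simp add: powr_powr)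
    finally have "F x * \<Psi> x powr (-q) \<le> F x * F x powr (- (P * gi))"
      using Fp by (intro mult_left_mono) auto
    also have "\<dots> = F x powr (1 - P * gi)" using Fp by (simp add: powr_diff powr_minus field_simps)
    finally show ?thesis unfolding kap .
  qed
  have fv0: "\<bar>f x\<bar> * v0 x = F x * \<Psi> x powr (-q)" for x unfolding v0_def F_def by simp
  have "f \<in> Lpw M p0 v0"
  proof (cases "p0 = top")
    case True
    have "wnorm M p0 v0 f \<le> 1"
      unfolding wnorm_def True Lnorm_inf
    proof (rule esssup_I)
      show "AE x in M. ennreal (\<bar>f x\<bar> * v0 x) * indicator (space M) x \<le> 1"
      proof (intro AE_I2)
        fix x assume x: "x \<in> space M"
        have "F x powr (P * rcp p0) \<le> 1" using True by simp
        hence "F x * \<Psi> x powr (-q) \<le> 1" using key[OF x] by (rule order_trans[rotated])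
        thus "ennreal (\<bar>f x\<bar> * v0 x) * indicator (space M) x \<le> 1" using x fv0 by simp
      qed
    qed (simp add: v0_def)
    hence "wnorm M p0 v0 f < top" by (simp add: le_less_trans)
    thus ?thesis unfolding Lpw_def by simp
  next
    case False
    define P0 where "P0 = enn2real p0"
    have P0: "0 < P0" unfolding P0_def using False pos by (simp add: enn2real_pos)
    have rp0: "rcp p0 = 1 / P0" unfolding P0_def using rcp_fin[OF pos(1) False] .
    have "(\<integral>\<^sup>+x. epow (ennreal (\<bar>f x\<bar> * v0 x)) (enn2real p0) \<partial>M) \<le> (\<integral>\<^sup>+x. ennreal (F x powr P) \<partial>M)"
    proof (rule nn_integral_mono)
      fix x assume x: "x \<in> space M"
      have nn: "0 \<le> F x * \<Psi> x powr (-q)" using Fnn[OF x] by simp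
      have "(F x * \<Psi> x powr (-q)) powr P0 \<le> (F x powr (P * rcp p0)) powr P0"
        using key[OF x] nn P0 by (intro powr_mono2) auto
      also have "\<dots> = F x powr P" unfolding rp0 using P0 by (simp add: powr_powr)
      finally show "epow (ennreal (\<bar>f x\<bar> * v0 x)) (enn2real p0) \<le> ennreal (F x powr P)"
        unfolding fv0 P0_def[symmetric] using nn by (simp add: epow_ennreal ennreal_leI)
    qed
    hence "(\<integral>\<^sup>+x. epow (ennreal (\<bar>f x\<bar> * v0 x)) (enn2real p0) \<partial>M) < top" using IF by (rule le_less_trans)
    hence "wnorm M p0 v0 f < top" unfolding wnorm_fin_iff[OF False pos(1)] .
    thus ?thesis unfolding Lpw_def by simp
  qed
  with Wc show ?thesis by blast
qed


lemma alpha_exp_comm: "alpha_exp a b = alpha_exp b a"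
  unfolding alpha_exp_def by (simp add: add.commute)

lemma case_neg:
  assumes sf: "sigma_finite_measure M" and B: "basis_of_sets M \<U>"
    and pos: "0 < p0" "0 < s0" "0 < r0" "0 < p" "0 < s" "0 < r"
    and r1: "rcp p - rcp p0 = gi" and r2: "rcp s - rcp s0 = gi" and r3: "rcp r0 - rcp r = gi"
    and gi: "gi < 0"
    and wW: "weight M w" and wV: "weight M v"
    and K: "wv_const M \<U> s r w v < top"
    and mb: "maxop_bounded M \<U> (t_exp gi s0 r0 s r) (vt_weight gi s0 r0 w v) (wt_weight gi s0 r0 w v)"
    and f: "f \<in> Lpw M p v"
  shows "\<exists>w0 v0. (w0, v0) \<in> W_class M \<U> gi s0 r0 w v \<and> f \<in> Lpw M p0 v0"
proof -
  define e where "e = - gi"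
  have e: "0 < e" unfolding e_def using gi by simp
  have r3': "rcp r - rcp r0 = e" and r2': "rcp s0 - rcp s = e" unfolding e_def using r2 r3 by simp_all
  note ex = exps[OF pos(6) pos(5) pos(3) pos(2) e r3' r2']
  define Sr where "Sr = enn2real r"
  define \<alpha> where "\<alpha> = alpha_exp s0 r0"
  have ac: "alpha_exp r0 s0 = \<alpha>" unfolding \<alpha>_def by (rule alpha_exp_comm)
  have Sr: "0 < Sr" and al: "0 < \<alpha>" using ex unfolding Sr_def ac by auto
  have [measurable]: "w \<in> borel_measurable M" "v \<in> borel_measurable M" using wW wV by (auto dest: weightD)
  have wp: "\<And>x. x \<in> space M \<Longrightarrow> 0 < w x" and vp: "\<And>x. x \<in> space M \<Longrightarrow> 0 < v x"
    using wW wV by (auto dest: weightD)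
  define W where "W = (\<lambda>x. 1 / v x)"
  define V where "V = (\<lambda>x. 1 / w x)"
  have wW': "weight M W" unfolding weight_def W_def using vp by auto
  have wV': "weight M V" unfolding weight_def V_def using wp by auto
  have sw: "wv_const M \<U> s r w v = wv_const M \<U> r s W V"
    unfolding W_def V_def using B pos wp by (intro wv_const_swap) auto
  have K': "wv_const M \<U> r s W V < top" using K sw by simp
  have te: "t_exp gi s0 r0 s r = ennreal (enn2real r / alpha_exp r0 s0)"
  proof -
    have sE: "ennreal Sr = r" unfolding Sr_def using ex by (simp add: ennreal_enn2real_if)
    have "t_exp gi s0 r0 s r = r / ennreal \<alpha>" using gi by (simp add: t_exp_def \<alpha>_def)
    also have "\<dots> = ennreal Sr / ennreal \<alpha>" unfolding sE ..
    also have "\<dots> = ennreal (Sr / \<alpha>)" by (rule divide_ennreal) (use Sr al in auto)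
    finally show ?thesis unfolding Sr_def ac .
  qed
  have mb': "maxop_bounded M \<U> (ennreal (enn2real r / alpha_exp r0 s0)) (vt_weight gi s0 r0 w v) (wt_weight gi s0 r0 w v)"
    using mb unfolding te .
  have ae: "vt_weight gi s0 r0 w v x = V x powr alpha_exp r0 s0" if x: "x \<in> space M" for x
    unfolding ac V_def vt_weight_def using gi wp[OF x] by (simp add: powr_divide powr_minus divide_inverse inverse_powr \<alpha>_def)
  have be: "wt_weight gi s0 r0 w v x = W x powr alpha_exp r0 s0" if x: "x \<in> space M" for x
    unfolding ac W_def wt_weight_def using gi vp[OF x] by (simp add: powr_divide powr_minus divide_inverse inverse_powr \<alpha>_def)
  obtain h0 where [measurable]: "h0 \<in> borel_measurable M" and h0p: "\<And>x. 0 < h0 x"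
    and h0i: "(\<integral>\<^sup>+x. ennreal (h0 x) \<partial>M) \<noteq> top"
    using h0_exists[OF sf] by metis
  define G0 where "G0 = (\<lambda>x. h0 x powr (1 / Sr))"
  have G0m[measurable]: "G0 \<in> borel_measurable M" unfolding G0_def by measurable
  have G0p: "0 < G0 x" if "x \<in> space M" for x unfolding G0_def using h0p[of x] by simp
  have G0fin: "(\<integral>\<^sup>+x. ennreal (G0 x powr enn2real r) \<partial>M) \<noteq> top"
  proof -
    have "(\<integral>\<^sup>+x. ennreal (G0 x powr enn2real r) \<partial>M) = (\<integral>\<^sup>+x. ennreal (h0 x) \<partial>M)"
      by (rule nn_integral_cong) (use h0p Sr in \<open>simp add: G0_def powr_powr Sr_def[symmetric] less_imp_le\<close>)
    then show ?thesis using h0i by simp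
  qed
  obtain \<Psi> where \<Psi>m[measurable]: "\<Psi> \<in> borel_measurable M" and G0\<Psi>: "\<And>x. x \<in> space M \<Longrightarrow> G0 x \<le> \<Psi> x"
    and \<Psi>fin: "(\<integral>\<^sup>+x. ennreal (\<Psi> x powr enn2real r) \<partial>M) \<noteq> top"
    and wvc: "wv_const M \<U> r0 s0 (\<lambda>x. W x * \<Psi> x powr (-(enn2real r * e))) (\<lambda>x. V x * \<Psi> x powr (-(enn2real r * e))) < top"
    by (rule core[OF B pos(6) pos(5) pos(3) pos(2) e r3' r2' wW' wV' K' mb' ae be G0m G0p G0fin]) (assumption | rule that)+
  define q where "q = Sr * e"
  have q0: "0 < q" unfolding q_def using Sr e by simp
  have \<Psi>p: "0 < \<Psi> x" if "x \<in> space M" for x using G0p[OF that] G0\<Psi>[OF that] by simp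
  define w0 where "w0 = (\<lambda>x. w x * \<Psi> x powr q)"
  define v0 where "v0 = (\<lambda>x. v x * \<Psi> x powr q)"
  have w0p: "0 < w0 x" if x: "x \<in> space M" for x
  proof -
    have "0 < \<Psi> x powr q" using \<Psi>p[OF x] by simp
    thus ?thesis unfolding w0_def using wp[OF x] by simp
  qed
  have v0p: "0 < v0 x" if x: "x \<in> space M" for x
  proof -
    have "0 < \<Psi> x powr q" using \<Psi>p[OF x] by simp
    thus ?thesis unfolding v0_def using vp[OF x] by simp
  qed
  have [measurable]: "w0 \<in> borel_measurable M" "v0 \<in> borel_measurable M" unfolding w0_def v0_def by measurable
  have Wc: "(w0, v0) \<in> W_class M \<U> gi s0 r0 w v"
  proof -
    have "weight M w0" unfolding weight_def using w0p by auto
    moreover have "weight M v0" unfolding weight_def using v0p by auto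
    moreover have "\<forall>x\<in>space M. w0 x / v0 x = w x / v x"
    proof
      fix x assume x: "x \<in> space M"
      have "\<Psi> x powr q \<noteq> 0" using \<Psi>p[OF x] by simp
      thus "w0 x / v0 x = w x / v x" unfolding w0_def v0_def by simp
    qed
    moreover have "wv_const M \<U> s0 r0 w0 v0 < top"
    proof -
      have "wv_const M \<U> s0 r0 w0 v0 = wv_const M \<U> r0 s0 (\<lambda>x. 1 / v0 x) (\<lambda>x. 1 / w0 x)"
        using B pos w0p by (intro wv_const_swap) auto
      also have "\<dots> = wv_const M \<U> r0 s0 (\<lambda>x. W x * \<Psi> x powr (-(enn2real r * e))) (\<lambda>x. V x * \<Psi> x powr (-(enn2real r * e)))"
      proof (rule wv_const_cong[OF B])
        fix x assume x: "x \<in> space M"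
        show "1 / v0 x = W x * \<Psi> x powr (-(enn2real r * e))"
          unfolding v0_def W_def q_def Sr_def using \<Psi>p[OF x] by (simp add: powr_minus divide_inverse)
        show "1 / w0 x = V x * \<Psi> x powr (-(enn2real r * e))"
          unfolding w0_def V_def q_def Sr_def using \<Psi>p[OF x] by (simp add: powr_minus divide_inverse)
      qed (use pos in \<open>auto simp: W_def V_def\<close>)
      finally show ?thesis using wvc by simp
    qed
    ultimately show ?thesis unfolding W_class_def using gi by simp
  qed
  have fm[measurable]: "f \<in> borel_measurable M" using f by (simp add: Lpw_def)
  define F where "F = (\<lambda>x. \<bar>f x\<bar> * v x)"
  have Fm[measurable]: "F \<in> borel_measurable M" unfolding F_def by measurable
  have Fnn: "0 \<le> F x" if "x \<in> space M" for x unfolding F_def using vp[OF that] by simp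
  have fv0: "\<bar>f x\<bar> * v0 x = F x * \<Psi> x powr q" for x unfolding v0_def F_def by simp
  have p0f: "p0 \<noteq> top" using r1 e rcp_nonneg[of p] unfolding e_def by (intro rcp_pos_fin) linarith
  define P0 where "P0 = enn2real p0"
  have P0: "0 < P0" unfolding P0_def using p0f pos by (simp add: enn2real_pos)
  have rp0: "rcp p0 = 1 / P0" unfolding P0_def using rcp_fin[OF pos(1) p0f] .
  have "(\<integral>\<^sup>+x. epow (ennreal (\<bar>f x\<bar> * v0 x)) (enn2real p0) \<partial>M) < top"
  proof (cases "p = top")
    case False
    define P where "P = enn2real p"
    have P: "0 < P" unfolding P_def using False pos by (simp add: enn2real_pos)
    have rp: "rcp p = 1 / P" unfolding P_def using rcp_fin[OF pos(4) False] .
    have IF: "(\<integral>\<^sup>+x. ennreal (F x powr P) \<partial>M) < top"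
    proof -
      have "wnorm M p v f < top" using f by (simp add: Lpw_def)
      hence "(\<integral>\<^sup>+x. epow (ennreal (\<bar>f x\<bar> * v x)) (enn2real p) \<partial>M) < top"
        unfolding wnorm_fin_iff[OF False pos(4)] .
      moreover have "(\<integral>\<^sup>+x. epow (ennreal (\<bar>f x\<bar> * v x)) (enn2real p) \<partial>M) = (\<integral>\<^sup>+x. ennreal (F x powr P) \<partial>M)"
        by (rule nn_integral_cong) (use Fnn in \<open>simp add: epow_ennreal F_def P_def\<close>)
      ultimately show ?thesis by simp
    qed
    define \<theta> where "\<theta> = P0 / P"
    have th1: "1 - \<theta> = P0 * e" unfolding \<theta>_def using r1 rp rp0 P P0 unfolding e_def by (simp add: field_simps)
    have th: "0 < \<theta>" "\<theta> < 1"
    proof -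
      show "0 < \<theta>" unfolding \<theta>_def using P P0 by simp
      have "0 < P0 * e" using P0 e by simp
      thus "\<theta> < 1" using th1 by linarith
    qed
    have "(\<integral>\<^sup>+x. epow (ennreal (\<bar>f x\<bar> * v0 x)) (enn2real p0) \<partial>M)
        \<le> (\<integral>\<^sup>+x. ennreal (F x powr P) + ennreal (\<Psi> x powr Sr) \<partial>M)"
    proof (rule nn_integral_mono)
      fix x assume x: "x \<in> space M"
      have nn: "0 \<le> F x * \<Psi> x powr q" using Fnn[OF x] by simp
      have "(F x * \<Psi> x powr q) powr P0 = (F x powr P) powr \<theta> * (\<Psi> x powr Sr) powr (1 - \<theta>)"
      proof -
        have "(F x * \<Psi> x powr q) powr P0 = F x powr P0 * \<Psi> x powr (q * P0)"
          using Fnn[OF x] \<Psi>p[OF x] by (simp add: powr_mult powr_powr)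
        moreover have "(F x powr P) powr \<theta> = F x powr P0" unfolding \<theta>_def using P by (simp add: powr_powr)
        moreover have "(\<Psi> x powr Sr) powr (1 - \<theta>) = \<Psi> x powr (q * P0)"
          unfolding th1 q_def by (simp add: powr_powr mult_ac)
        ultimately show ?thesis by simp
      qed
      also have "\<dots> \<le> F x powr P + \<Psi> x powr Sr" by (rule young_sum[OF th]) auto
      finally show "epow (ennreal (\<bar>f x\<bar> * v0 x)) (enn2real p0) \<le> ennreal (F x powr P) + ennreal (\<Psi> x powr Sr)"
        unfolding fv0 P0_def[symmetric] using nn by (simp add: epow_ennreal ennreal_plus[symmetric] ennreal_leI del: ennreal_plus)
    qed
    also have "\<dots> = (\<integral>\<^sup>+x. ennreal (F x powr P) \<partial>M) + (\<integral>\<^sup>+x. ennreal (\<Psi> x powr Sr) \<partial>M)"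
      by (rule nn_integral_add) auto
    also have "\<dots> < top" using IF \<Psi>fin unfolding Sr_def by (simp add: top.not_eq_extremum)
    finally show ?thesis .
  next
    case True
    have eP0: "e * P0 = 1" using r1 True rp0 P0 unfolding e_def by (simp add: field_simps)
    define E where "E = wnorm M p v f"
    have Ef: "E \<noteq> top" unfolding E_def using f by (simp add: Lpw_def)
    have AEF: "AE x in M. ennreal (\<bar>f x\<bar> * v x) * indicator (space M) x \<le> E"
      unfolding E_def wnorm_def True Lnorm_inf by (rule esssup_AE)
    define Er where "Er = enn2real E"
    have "(\<integral>\<^sup>+x. epow (ennreal (\<bar>f x\<bar> * v0 x)) (enn2real p0) \<partial>M)
        \<le> (\<integral>\<^sup>+x. ennreal (Er powr P0) * ennreal (\<Psi> x powr Sr) \<partial>M)"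
    proof (rule nn_integral_mono_AE)
      show "AE x in M. epow (ennreal (\<bar>f x\<bar> * v0 x)) (enn2real p0) \<le> ennreal (Er powr P0) * ennreal (\<Psi> x powr Sr)"
        using AEF
      proof (elim AE_mp, intro AE_I2 impI)
        fix x assume x: "x \<in> space M" and h: "ennreal (\<bar>f x\<bar> * v x) * indicator (space M) x \<le> E"
        have "ennreal (F x) \<le> ennreal Er" using h x Ef unfolding Er_def F_def by (simp add: ennreal_enn2real_if)
        hence FE: "F x \<le> Er" by (simp add: ennreal_le_iff Er_def)
        have nn: "0 \<le> F x * \<Psi> x powr q" using Fnn[OF x] by simp
        have "(F x * \<Psi> x powr q) powr P0 = F x powr P0 * \<Psi> x powr Sr"
        proof -
          have "(F x * \<Psi> x powr q) powr P0 = F x powr P0 * \<Psi> x powr (q * P0)"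
            using Fnn[OF x] \<Psi>p[OF x] by (simp add: powr_mult powr_powr)
          moreover have "q * P0 = Sr" unfolding q_def using eP0 by (simp add: mult.assoc)
          ultimately show ?thesis by simp
        qed
        also have "\<dots> \<le> Er powr P0 * \<Psi> x powr Sr"
          using FE Fnn[OF x] P0 by (intro mult_right_mono powr_mono2) auto
        finally have "(F x * \<Psi> x powr q) powr P0 \<le> Er powr P0 * \<Psi> x powr Sr" .
        thus "epow (ennreal (\<bar>f x\<bar> * v0 x)) (enn2real p0) \<le> ennreal (Er powr P0) * ennreal (\<Psi> x powr Sr)"
          unfolding fv0 P0_def[symmetric] using nn by (simp add: epow_ennreal ennreal_mult[symmetric] ennreal_leI del: ennreal_plus)
      qed
    qed
    also have "\<dots> = ennreal (Er powr P0) * (\<integral>\<^sup>+x. ennreal (\<Psi> x powr Sr) \<partial>M)"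
      by (rule nn_integral_cmult) measurable
    also have "\<dots> < top" using \<Psi>fin unfolding Sr_def by (simp add: ennreal_mult_less_top top.not_eq_extremum)
    finally show ?thesis .
  qed
  hence "wnorm M p0 v0 f < top" unfolding wnorm_fin_iff[OF p0f pos(1)] .
  hence "f \<in> Lpw M p0 v0" unfolding Lpw_def by simp
  with Wc show ?thesis by blast
qed


theorem corollary2p5:
  fixes M :: "'a measure" and \<U> :: "'a set set"
    and p0 s0 r0 p s r :: ennreal and gi :: real
    and w v :: "'a \<Rightarrow> real"
  assumes "sigma_finite_measure M"
    and "basis_of_sets M \<U>"
    and "0 < p0" "0 < s0" "0 < r0" "0 < p" "0 < s" "0 < r"
    and "rcp p - rcp p0 = gi" "rcp s - rcp s0 = gi" "rcp r0 - rcp r = gi"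
    and "weight M w" "weight M v"
    and "wv_const M \<U> s r w v < \<infinity>"
    and "gi \<noteq> 0 \<Longrightarrow> maxop_bounded M \<U> (t_exp gi s0 r0 s r)
            (vt_weight gi s0 r0 w v) (wt_weight gi s0 r0 w v)"
  shows "Lpw M p v \<subseteq> (\<Union>(w0, v0) \<in> W_class M \<U> gi s0 r0 w v. Lpw M p0 v0)"
proof
  fix f assume f: "f \<in> Lpw M p v"
  have K: "wv_const M \<U> s r w v < top" using assms(14) by simp
  have "\<exists>w0 v0. (w0, v0) \<in> W_class M \<U> gi s0 r0 w v \<and> f \<in> Lpw M p0 v0"
  proof (cases gi "0::real" rule: linorder_cases)
    case less
    have mb: "maxop_bounded M \<U> (t_exp gi s0 r0 s r) (vt_weight gi s0 r0 w v) (wt_weight gi s0 r0 w v)"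
      using assms(15) less by simp
    show ?thesis by (rule case_neg[OF assms(1-11) less assms(12,13) K mb f])
  next
    case equal
    hence "rcp p = rcp p0" using assms(9) by simp
    hence "p = p0" using rcp_inj assms(3,6) by blast
    thus ?thesis using f equal unfolding W_class_def by auto
  next
    case greater
    have mb: "maxop_bounded M \<U> (t_exp gi s0 r0 s r) (vt_weight gi s0 r0 w v) (wt_weight gi s0 r0 w v)"
      using assms(15) greater by simp
    show ?thesis by (rule case_pos[OF assms(1-11) greater assms(12,13) K mb f])
  qed
  then show "f \<in> (\<Union>(w0, v0) \<in> W_class M \<U> gi s0 r0 w v. Lpw M p0 v0)" by blast
qed


end
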